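(* Consider a finite MDP with state space $\mathcal S$, action space $\mathcal A$, transition kernel $P$, deterministic reward function $r(s,a,s')$, discount $\gamma\in[0,1)$ and optimal Q-function $Q^*$. Let $\beta>0$. Let $(s_k,a_k,s_k')_{k\ge0}$ be i.i.d. triples where $s_k\sim p$ for a fixed state distribution $p$, $a_k\sim b(\cdot\mid s_k)$ for a fixed behavior policy $b$, and $s_k'\sim P(\cdot\mid s_k,a_k)$, and assume $d(s,a):=p(s)b(a\mid s)>0$ for all $(s,a)$. Let $Q^A_0,Q^B_0\in\mathbb R^{\mathcal S\times\mathcal A}$ be arbitrary and define (AGT2-QL) $$Q^A_{k+1}(s_k,a_k)=Q^A_k(s_k,a_k)+\alpha_k\Big(r(s_k,a_k,s_k')+\gamma\max_{a\in\mathcal A}Q^B_k(s_k',a)-Q^A_k(s_k,a_k)\Big),$$ $$Q^B_{k+1}(s_k,a_k)=Q^B_k(s_k,a_k)+\alpha_k\beta\big(Q^A_k(s_k,a_k)-Q^B_k(s_k,a_k)\big),$$ with all other entries of $Q^A_{k+1},Q^B_{k+1}$ equal to those of $Q^A_k,Q^B_k$. If the step sizes satisfy $0\le\alpha_k\le1$, $\sum_k\alpha_k=\infty$, $\sum_k\alpha_k^2<\infty$, then $Q^A_k\to Q^*$ and $Q^B_k\to Q^*$ with probability one.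
   Context: $Q^*$ is the unique solution of $Q^*(s,a)=\sum_{s'}P(s'\mid s,a)\big(r(s,a,s')+\gamma\max_{a'}Q^*(s',a')\big)$. There are no terminal states. *)

theory Defs
  imports "HOL-Probability.Probability"
begin

definition bellman_opt ::
  "('s::finite \<Rightarrow> 'a::finite \<Rightarrow> 's pmf) \<Rightarrow> ('s \<Rightarrow> 'a \<Rightarrow> 's \<Rightarrow> real) \<Rightarrow> real
   \<Rightarrow> ('s \<Rightarrow> 'a \<Rightarrow> real) \<Rightarrow> bool" where
  "bellman_opt P r g Q \<longleftrightarrow>
     (\<forall>s a. Q s a = (\<Sum>s'\<in>UNIV. pmf (P s a) s' * (r s a s' + g * (MAX a'\<in>UNIV. Q s' a'))))"

definition sample_pmf ::
  "'s pmf \<Rightarrow> ('s \<Rightarrow> 'a pmf) \<Rightarrow> ('s \<Rightarrow> 'a \<Rightarrow> 's pmf) \<Rightarrow> ('s \<times> 'a \<times> 's) pmf" where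
  "sample_pmf p b P = do { s \<leftarrow> p; a \<leftarrow> b s; s' \<leftarrow> P s a; return_pmf (s, a, s') }"

definition agt2_step ::
  "('s \<Rightarrow> 'a \<Rightarrow> 's \<Rightarrow> real) \<Rightarrow> real \<Rightarrow> real \<Rightarrow> real
   \<Rightarrow> ('s \<Rightarrow> 'a::finite \<Rightarrow> real) \<times> ('s \<Rightarrow> 'a \<Rightarrow> real) \<Rightarrow> 's \<times> 'a \<times> 's
   \<Rightarrow> ('s \<Rightarrow> 'a \<Rightarrow> real) \<times> ('s \<Rightarrow> 'a \<Rightarrow> real)" where
  "agt2_step r g be al QQ x =
     (case QQ of (QA, QB) \<Rightarrow> case x of (s, a, s') \<Rightarrow>
       ((\<lambda>t c. if t = s \<and> c = a
                then QA s a + al * (r s a s' + g * (MAX a'\<in>UNIV. QB s' a') - QA s a)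
                else QA t c),
        (\<lambda>t c. if t = s \<and> c = a
                then QB s a + al * be * (QA s a - QB s a)
                else QB t c)))"

primrec agt2_iter ::
  "('s \<Rightarrow> 'a \<Rightarrow> 's \<Rightarrow> real) \<Rightarrow> real \<Rightarrow> real \<Rightarrow> (nat \<Rightarrow> real)
   \<Rightarrow> ('s \<Rightarrow> 'a::finite \<Rightarrow> real) \<Rightarrow> ('s \<Rightarrow> 'a \<Rightarrow> real) \<Rightarrow> (nat \<Rightarrow> 's \<times> 'a \<times> 's)
   \<Rightarrow> nat \<Rightarrow> ('s \<Rightarrow> 'a \<Rightarrow> real) \<times> ('s \<Rightarrow> 'a \<Rightarrow> real)" where
  "agt2_iter r g be al QA0 QB0 xs 0 = (QA0, QB0)"
| "agt2_iter r g be al QA0 QB0 xs (Suc k) =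
     agt2_step r g be (al k) (agt2_iter r g be al QA0 QB0 xs k) (xs k)"

end

theory Submission
  imports Defs "HOL-Probability.Probability"
begin


definition dep :: "nat \<Rightarrow> ((nat \<Rightarrow> 'z) \<Rightarrow> 'b) \<Rightarrow> bool" where
  "dep k G \<longleftrightarrow> (\<forall>xs ys. (\<forall>j<k. xs j = ys j) \<longrightarrow> G xs = G ys)"

lemma PiM_count_all_sets:
  fixes I :: "'i set"
  assumes "finite I" "A \<subseteq> space (PiM I (\<lambda>_. count_space (UNIV::'z::finite set)))"
  shows "A \<in> sets (PiM I (\<lambda>_. count_space (UNIV::'z::finite set)))"
proof -
  have sp: "space (PiM I (\<lambda>_. count_space (UNIV::'z set))) = PiE I (\<lambda>_. UNIV)"
    by (simp add: space_PiM)
  have fin: "finite A" using assms sp finite_PiE[of I "\<lambda>_. UNIV::'z set"] finite_subset by auto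
  have eq: "A = (\<Union>v\<in>A. PiE I (\<lambda>i. {v i}))"
  proof
    show "A \<subseteq> (\<Union>v\<in>A. PiE I (\<lambda>i. {v i}))" using assms(2) sp by (auto simp: PiE_iff)
    show "(\<Union>v\<in>A. PiE I (\<lambda>i. {v i})) \<subseteq> A"
    proof
      fix x assume "x \<in> (\<Union>v\<in>A. PiE I (\<lambda>i. {v i}))"
      then obtain v where v: "v \<in> A" "x \<in> PiE I (\<lambda>i. {v i})" by auto
      have "v \<in> PiE I (\<lambda>_. UNIV)" using v assms(2) sp by auto
      then have "x = v" using v(2) by (auto simp: PiE_iff extensional_def fun_eq_iff)
      then show "x \<in> A" using v by simp
    qed
  qed
  have "(\<Union>v\<in>A. PiE I (\<lambda>i. {v i})) \<in> sets (PiM I (\<lambda>_. count_space (UNIV::'z set)))"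
    using fin by (intro sets.finite_UN sets_PiM_I_finite assms(1)) auto
  then show ?thesis using eq by simp
qed

lemma PiM_count_measurable:
  fixes f :: "('i \<Rightarrow> 'z::finite) \<Rightarrow> real"
  assumes "finite I"
  shows "f \<in> borel_measurable (PiM I (\<lambda>_. count_space (UNIV::'z set)))"
  by (rule measurableI) (auto intro!: PiM_count_all_sets assms)

lemma dep_mono: "dep k G \<Longrightarrow> k \<le> m \<Longrightarrow> dep m G"
  unfolding dep_def by auto

lemma dep_Suc_app: "(\<And>z. dep k (\<lambda>xs. F xs z)) \<Longrightarrow> dep (Suc k) (\<lambda>xs. F xs (xs k))"
proof -
  assume a: "\<And>z. dep k (\<lambda>xs. F xs z)"
  show ?thesis unfolding dep_def
  proof (intro allI impI)
    fix xs ys :: "nat \<Rightarrow> 'a" assume h: "\<forall>j<Suc k. xs j = ys j"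
    then have "xs k = ys k" by auto
    moreover have "F xs z = F ys z" for z using a[of z] h unfolding dep_def by auto
    ultimately show "F xs (xs k) = F ys (ys k)" by simp
  qed
qed

lemma tail_bound:
  fixes f :: "nat \<Rightarrow> real"
  assumes "summable f" "\<And>k. 0 \<le> f k"
  shows "sum f {n..<m} \<le> (\<Sum>k. f (k + n))"
proof -
  have "sum f {n..<m} = sum (f \<circ> plus n) {0..<m - n}" by (rule sum.atLeastLessThan_shift_0)
  also have "\<dots> = sum (\<lambda>k. f (k + n)) {0..<m - n}" by (simp add: o_def add.commute)
  also have "\<dots> \<le> (\<Sum>k. f (k + n))"
    by (rule sum_le_suminf) (use assms summable_ignore_initial_segment in auto)
  finally show ?thesis .
qed

lemma tail_zero:
  fixes f :: "nat \<Rightarrow> real"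
  assumes "summable f"
  shows "(\<lambda>n. \<Sum>k. f (k + n)) \<longlonglongrightarrow> 0"
proof -
  have "(\<lambda>n. \<Sum>k. f (k + n)) = (\<lambda>n. suminf f - (\<Sum>i<n. f i))"
  proof
    fix n show "(\<Sum>k. f (k + n)) = suminf f - (\<Sum>i<n. f i)"
      using suminf_split_initial_segment[OF assms, of n] by simp
  qed
  moreover have "(\<lambda>n. suminf f - (\<Sum>i<n. f i)) \<longlonglongrightarrow> suminf f - suminf f"
    by (intro tendsto_diff tendsto_const summable_LIMSEQ assms)
  ultimately show ?thesis by simp
qed

locale iidq =
  fixes M :: "'m measure" and X :: "nat \<Rightarrow> 'm \<Rightarrow> 'z::finite" and mu :: "'z pmf"
  assumes ps: "prob_space M" and meas: "\<And>k. X k \<in> measurable M (count_space UNIV)"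
   and ind: "prob_space.indep_vars M (\<lambda>_. count_space UNIV) X UNIV"
   and dis: "\<And>k. distr M (count_space UNIV) (X k) = measure_pmf mu"
begin

sublocale prob_space M by (rule ps)

definition path :: "'m \<Rightarrow> nat \<Rightarrow> 'z" where "path \<omega> = (\<lambda>j. X j \<omega>)"

lemma dep_restrict:
  assumes "dep k G"
  shows "G (path \<omega>) = (\<lambda>v. G (\<lambda>j. if j < k then v j else undefined)) (restrict (\<lambda>j. X j \<omega>) {..<k})"
  using assms unfolding dep_def path_def by (auto)

lemma dep_measurable:
  fixes G :: "(nat \<Rightarrow> 'z) \<Rightarrow> real"
  assumes "dep k G"
  shows "(\<lambda>\<omega>. G (path \<omega>)) \<in> borel_measurable M"
proof -
  have "(\<lambda>\<omega>. (\<lambda>v. G (\<lambda>j. if j < k then v j else undefined)) (restrict (\<lambda>j. X j \<omega>) {..<k})) \<in> borel_measurable M"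
    by (rule measurable_compose[OF measurable_restrict PiM_count_measurable]) (auto intro: meas)
  then show ?thesis using dep_restrict[OF assms] by simp
qed

lemma dep_bounded:
  fixes G :: "(nat \<Rightarrow> 'z) \<Rightarrow> real"
  assumes "dep k G"
  shows "\<exists>B. \<forall>\<omega>. \<bar>G (path \<omega>)\<bar> \<le> B"
proof -
  let ?G' = "\<lambda>v. G (\<lambda>j. if j < k then v j else undefined)"
  let ?S = "PiE {..<k} (\<lambda>_. UNIV::'z set)"
  have fin: "finite (abs ` ?G' ` ?S)" by (intro finite_imageI finite_PiE) auto
  show ?thesis
  proof (intro exI allI)
    fix \<omega>
    have "restrict (\<lambda>j. X j \<omega>) {..<k} \<in> ?S" by auto
    then have "?G' (restrict (\<lambda>j. X j \<omega>) {..<k}) \<in> ?G' ` ?S" by (rule imageI)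
    then have "\<bar>?G' (restrict (\<lambda>j. X j \<omega>) {..<k})\<bar> \<in> abs ` ?G' ` ?S" by (rule imageI)
    then have "\<bar>?G' (restrict (\<lambda>j. X j \<omega>) {..<k})\<bar> \<le> Max (abs ` ?G' ` ?S)"
      using fin by (intro Max_ge)
    then show "\<bar>G (path \<omega>)\<bar> \<le> Max (abs ` ?G' ` ?S)" using dep_restrict[OF assms] by simp
  qed
qed

lemma dep_integrable:
  fixes G :: "(nat \<Rightarrow> 'z) \<Rightarrow> real"
  assumes "dep k G"
  shows "integrable M (\<lambda>\<omega>. G (path \<omega>))"
proof -
  obtain B where "\<forall>\<omega>. \<bar>G (path \<omega>)\<bar> \<le> B" using dep_bounded[OF assms] by blast
  then show ?thesis by (intro integrable_const_bound[where B=B] dep_measurable[OF assms]) auto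
qed


lemma exp_X:
  fixes h :: "'z \<Rightarrow> real"
  shows "(\<integral>\<omega>. h (X k \<omega>) \<partial>M) = (\<Sum>z\<in>UNIV. pmf mu z * h z)"
proof -
  have "(\<integral>\<omega>. h (X k \<omega>) \<partial>M) = integral\<^sup>L (distr M (count_space UNIV) (X k)) h"
    by (rule integral_distr[symmetric]) (auto intro: meas)
  also have "\<dots> = integral\<^sup>L (measure_pmf mu) h" by (simp add: dis)
  also have "\<dots> = (\<Sum>z\<in>UNIV. pmf mu z * h z)"
    by (subst integral_measure_pmf[of UNIV]) auto
  finally show ?thesis .
qed

lemma indep_past:
  fixes G :: "(nat \<Rightarrow> 'z) \<Rightarrow> real" and h :: "'z \<Rightarrow> real"
  assumes "dep k G"
  shows "indep_var borel (\<lambda>\<omega>. G (path \<omega>)) borel (\<lambda>\<omega>. h (X k \<omega>))"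
proof -
  have i: "indep_var (PiM {..<k} (\<lambda>_. count_space UNIV)) (\<lambda>\<omega>. restrict (\<lambda>i. X i \<omega>) {..<k})
      (PiM {k} (\<lambda>_. count_space UNIV)) (\<lambda>\<omega>. restrict (\<lambda>i. X i \<omega>) {k})"
    by (rule indep_var_restrict[OF ind]) auto
  have "indep_var borel ((\<lambda>v. G (\<lambda>j. if j < k then v j else undefined)) \<circ> (\<lambda>\<omega>. restrict (\<lambda>i. X i \<omega>) {..<k}))
      borel ((\<lambda>v. h (v k)) \<circ> (\<lambda>\<omega>. restrict (\<lambda>i. X i \<omega>) {k}))"
    by (rule indep_var_compose[OF i PiM_count_measurable PiM_count_measurable]) auto
  moreover have "((\<lambda>v. G (\<lambda>j. if j < k then v j else undefined)) \<circ> (\<lambda>\<omega>. restrict (\<lambda>i. X i \<omega>) {..<k}))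
     = (\<lambda>\<omega>. G (path \<omega>))" using dep_restrict[OF assms] by (auto simp: fun_eq_iff)
  moreover have "((\<lambda>v. h (v k)) \<circ> (\<lambda>\<omega>. restrict (\<lambda>i. X i \<omega>) {k})) = (\<lambda>\<omega>. h (X k \<omega>))"
    by (auto simp: fun_eq_iff)
  ultimately show ?thesis by simp
qed

lemma L3:
  fixes F :: "(nat \<Rightarrow> 'z) \<Rightarrow> 'z \<Rightarrow> real"
  assumes d: "\<And>z. dep k (\<lambda>xs. F xs z)"
  shows "(\<integral>\<omega>. F (path \<omega>) (X k \<omega>) \<partial>M) = (\<integral>\<omega>. (\<Sum>z\<in>UNIV. pmf mu z * F (path \<omega>) z) \<partial>M)"
proof -
  have eq: "F (path \<omega>) (X k \<omega>) = (\<Sum>z\<in>UNIV. F (path \<omega>) z * indicator {z} (X k \<omega>))" for \<omega>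
  proof -
    have "(\<Sum>z\<in>UNIV. F (path \<omega>) z * indicator {z} (X k \<omega>)) = (\<Sum>z\<in>{X k \<omega>}. F (path \<omega>) z * indicator {z} (X k \<omega>))"
      by (rule sum.mono_neutral_right) auto
    then show ?thesis by simp
  qed
  have int1: "integrable M (\<lambda>\<omega>. F (path \<omega>) z * indicator {z} (X k \<omega>))" for z
  proof -
    have "dep (Suc k) (\<lambda>xs. F xs z * indicator {z} (xs k))"
      using d[of z] unfolding dep_def by auto
    from dep_integrable[OF this] show ?thesis by (simp add: path_def)
  qed
  have int2: "integrable M (\<lambda>\<omega>. F (path \<omega>) z)" for z by (rule dep_integrable[OF d])
  have "(\<integral>\<omega>. F (path \<omega>) (X k \<omega>) \<partial>M) = (\<Sum>z\<in>UNIV. \<integral>\<omega>. F (path \<omega>) z * indicator {z} (X k \<omega>) \<partial>M)"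
    unfolding eq by (rule Bochner_Integration.integral_sum[of UNIV M "\<lambda>z \<omega>. F (path \<omega>) z * indicator {z} (X k \<omega>)"]) (rule int1)
  also have "\<dots> = (\<Sum>z\<in>UNIV. (\<integral>\<omega>. F (path \<omega>) z \<partial>M) * (\<integral>\<omega>. indicator {z} (X k \<omega>) \<partial>M))"
  proof (rule sum.cong[OF refl])
    fix z
    show "(\<integral>\<omega>. F (path \<omega>) z * indicator {z} (X k \<omega>) \<partial>M) = (\<integral>\<omega>. F (path \<omega>) z \<partial>M) * (\<integral>\<omega>. indicator {z} (X k \<omega>) \<partial>M)"
    proof (rule indep_var_lebesgue_integral)
      show "indep_var borel (\<lambda>\<omega>. F (path \<omega>) z) borel (\<lambda>\<omega>. indicator {z} (X k \<omega>))"
        by (rule indep_past[OF d])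
      show "integrable M (\<lambda>\<omega>. F (path \<omega>) z)" by (rule int2)
      have "dep (Suc k) (\<lambda>xs. indicator {z} (xs k) :: real)" unfolding dep_def by auto
      from dep_integrable[OF this] show "integrable M (\<lambda>\<omega>. indicator {z} (X k \<omega>) :: real)"
        by (simp add: path_def)
    qed
  qed
  also have "\<dots> = (\<Sum>z\<in>UNIV. pmf mu z * (\<integral>\<omega>. F (path \<omega>) z \<partial>M))"
  proof (rule sum.cong[OF refl])
    fix z
    have "(\<integral>\<omega>. indicator {z} (X k \<omega>) \<partial>M) = (\<Sum>y\<in>UNIV. pmf mu y * indicator {z} y)"
      by (rule exp_X)
    also have "\<dots> = (\<Sum>y\<in>{z}. pmf mu y * indicator {z} y)"
      by (rule sum.mono_neutral_right) auto
    finally show "(\<integral>\<omega>. F (path \<omega>) z \<partial>M) * (\<integral>\<omega>. indicator {z} (X k \<omega>) \<partial>M) = pmf mu z * (\<integral>\<omega>. F (path \<omega>) z \<partial>M)"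
      by simp
  qed
  also have "\<dots> = (\<integral>\<omega>. (\<Sum>z\<in>UNIV. pmf mu z * F (path \<omega>) z) \<partial>M)"
    by (subst Bochner_Integration.integral_sum) (auto intro: int2)
  finally show ?thesis .
qed

lemma dep_sets:
  assumes "dep k (P :: (nat \<Rightarrow> 'z) \<Rightarrow> bool)"
  shows "{\<omega>\<in>space M. P (path \<omega>)} \<in> sets M"
proof -
  have d: "dep k (\<lambda>xs. if P xs then 1 else 0::real)" using assms unfolding dep_def by auto
  have "(\<lambda>\<omega>. if P (path \<omega>) then 1 else 0::real) -` {1} \<inter> space M \<in> sets M"
    by (rule measurable_sets[OF dep_measurable[OF d]]) auto
  moreover have "(\<lambda>\<omega>. if P (path \<omega>) then 1 else 0::real) -` {1} \<inter> space M = {\<omega>\<in>space M. P (path \<omega>)}"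
    by (auto split: if_splits)
  ultimately show ?thesis by simp
qed

end

lemma depD: "dep k f \<Longrightarrow> \<forall>j<k. xs j = ys j \<Longrightarrow> f xs = f ys"
  by (simp add: dep_def)

lemma dep_comp: "dep k f \<Longrightarrow> dep k (\<lambda>xs. g (f xs))"
  unfolding dep_def by (intro allI impI) (erule allE, erule allE, erule impE, assumption, simp)

lemma dep_mult: fixes f g :: "(nat \<Rightarrow> 'z) \<Rightarrow> real" shows "dep k f \<Longrightarrow> dep k g \<Longrightarrow> dep k (\<lambda>xs. f xs * g xs :: real)"
  unfolding dep_def[of k "\<lambda>xs. f xs * g xs"]
proof (intro allI impI)
  fix xs ys :: "nat \<Rightarrow> 'z" assume "dep k f" "dep k g" "\<forall>j<k. xs j = ys j"
  then have "f xs = f ys" "g xs = g ys" by (auto intro: depD)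
  then show "f xs * g xs = f ys * g ys" by simp
qed

lemma dep_const: "dep k (\<lambda>xs. c)"
  unfolding dep_def by simp

lemma dep_pow2: fixes f :: "(nat \<Rightarrow> 'z) \<Rightarrow> real" shows "dep k f \<Longrightarrow> dep k (\<lambda>xs. (f xs)\<^sup>2 :: real)"
  unfolding dep_def[of k "\<lambda>xs. (f xs)\<^sup>2"]
proof (intro allI impI)
  fix xs ys :: "nat \<Rightarrow> 'z" assume "dep k f" "\<forall>j<k. xs j = ys j"
  then have "f xs = f ys" by (auto intro: depD)
  then show "(f xs)\<^sup>2 = (f ys)\<^sup>2" by simp
qed

lemma dep_sum:
  fixes f :: "nat \<Rightarrow> (nat \<Rightarrow> 'z) \<Rightarrow> real"
  assumes "\<And>k. k \<in> A \<Longrightarrow> dep m (f k)"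
  shows "dep m (\<lambda>xs. \<Sum>k\<in>A. f k xs :: real)"
  unfolding dep_def
proof (intro allI impI)
  fix xs ys :: "nat \<Rightarrow> 'z" assume h: "\<forall>j<m. xs j = ys j"
  show "(\<Sum>k\<in>A. f k xs) = (\<Sum>k\<in>A. f k ys)"
    by (rule sum.cong[OF refl]) (use assms h in \<open>blast intro: depD\<close>)
qed

context iidq
begin

context
  fixes phi :: "nat \<Rightarrow> (nat \<Rightarrow> 'z) \<Rightarrow> 'z \<Rightarrow> real" and al :: "nat \<Rightarrow> real" and C :: real
  assumes phi_dep: "\<And>k z. dep k (\<lambda>xs. phi k xs z)"
    and phi_bnd: "\<And>k xs z. \<bar>phi k xs z\<bar> \<le> C"
    and phi_mean: "\<And>k xs. (\<Sum>z\<in>UNIV. pmf mu z * phi k xs z) = 0"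
begin

definition trm :: "nat \<Rightarrow> (nat \<Rightarrow> 'z) \<Rightarrow> real" where
  "trm k xs = al k * phi k xs (xs k)"

lemma trmdep: "k < m \<Longrightarrow> dep m (trm k)"
proof -
  assume "k < m"
  have "dep (Suc k) (\<lambda>xs. al k * phi k xs (xs k))"
    by (rule dep_Suc_app[where F="\<lambda>xs z. al k * phi k xs z"]) (intro dep_mult dep_const phi_dep)
  then show ?thesis unfolding trm_def using \<open>k < m\<close> by (auto intro: dep_mono)
qed

lemma var_bound:
  fixes c :: "nat \<Rightarrow> (nat \<Rightarrow> 'z) \<Rightarrow> real"
  assumes c_dep: "\<And>k. dep k (c k)" and c_bnd: "\<And>k xs. \<bar>c k xs\<bar> \<le> 1"
  shows "(\<integral>\<omega>. (\<Sum>k\<in>{n..<m}. c k (path \<omega>) * trm k (path \<omega>))\<^sup>2 \<partial>M) \<le> C\<^sup>2 * (\<Sum>k\<in>{n..<m}. (al k)\<^sup>2)"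
proof (induction m)
  case 0
  then show ?case by simp
next
  case (Suc m)
  show ?case
  proof (cases "m < n")
    case True
    then show ?thesis by simp
  next
    case False
    let ?S = "\<lambda>xs. \<Sum>k\<in>{n..<m}. c k xs * trm k xs"
    let ?t = "\<lambda>xs. c m xs * trm m xs"
    have dS: "dep m ?S"
      by (intro dep_sum dep_mult dep_mono[OF c_dep] trmdep) auto
    have dt: "dep (Suc m) ?t"
      by (intro dep_mult dep_mono[OF c_dep] trmdep) auto
    have dS': "dep (Suc m) ?S" using dS by (rule dep_mono) simp
    have split: "(\<Sum>k\<in>{n..<Suc m}. c k xs * trm k xs) = ?S xs + ?t xs" for xs
      using False by simp
    have cross: "(\<integral>\<omega>. ?S (path \<omega>) * ?t (path \<omega>) \<partial>M) = 0"
    proof -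
      have "(\<integral>\<omega>. ?S (path \<omega>) * ?t (path \<omega>) \<partial>M)
          = (\<integral>\<omega>. (\<lambda>xs z. ?S xs * c m xs * al m * phi m xs z) (path \<omega>) (X m \<omega>) \<partial>M)"
        by (simp add: trm_def path_def mult.assoc)
      also have "\<dots> = (\<integral>\<omega>. (\<Sum>z\<in>UNIV. pmf mu z * ((\<lambda>xs z. ?S xs * c m xs * al m * phi m xs z) (path \<omega>) z)) \<partial>M)"
        by (rule L3) (intro dep_mult dS c_dep phi_dep dep_const)
      also have "\<dots> = (\<integral>\<omega>. ?S (path \<omega>) * c m (path \<omega>) * al m * (\<Sum>z\<in>UNIV. pmf mu z * phi m (path \<omega>) z) \<partial>M)"
      proof -
        have gen: "(\<Sum>z\<in>UNIV. pmf mu z * (A * f z)) = A * (\<Sum>z\<in>UNIV. pmf mu z * f z)" for A and f :: "'z \<Rightarrow> real"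
          by (simp add: sum_distrib_left mult_ac)
        show ?thesis by (simp only: gen)
      qed
      also have "\<dots> = 0" by (simp add: phi_mean)
      finally show ?thesis .
    qed
    have tb: "(?t xs)\<^sup>2 \<le> C\<^sup>2 * (al m)\<^sup>2" for xs
    proof -
      have "\<bar>?t xs\<bar> \<le> \<bar>C * al m\<bar>"
      proof -
        have "\<bar>?t xs\<bar> = \<bar>c m xs\<bar> * (\<bar>al m\<bar> * \<bar>phi m xs (xs m)\<bar>)" by (simp add: trm_def abs_mult)
        also have "\<dots> \<le> 1 * (\<bar>al m\<bar> * \<bar>C\<bar>)"
        proof (rule mult_mono)
          show "\<bar>c m xs\<bar> \<le> 1" by (rule c_bnd)
          have "\<bar>phi m xs (xs m)\<bar> \<le> \<bar>C\<bar>" using phi_bnd[of m xs "xs m"] by linarith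
          then show "\<bar>al m\<bar> * \<bar>phi m xs (xs m)\<bar> \<le> \<bar>al m\<bar> * \<bar>C\<bar>" by (rule mult_left_mono) simp
        qed auto
        finally show ?thesis by (simp add: abs_mult mult_ac)
      qed
      then have "(?t xs)\<^sup>2 \<le> (C * al m)\<^sup>2" by (simp add: abs_le_square_iff)
      then show ?thesis by (simp add: power_mult_distrib)
    qed
    have iS2: "integrable M (\<lambda>\<omega>. (?S (path \<omega>))\<^sup>2)"
      by (rule dep_integrable[of m "\<lambda>xs. (?S xs)\<^sup>2"]) (intro dep_pow2 dS)
    have iSt: "integrable M (\<lambda>\<omega>. ?S (path \<omega>) * ?t (path \<omega>))"
      by (rule dep_integrable[of "Suc m" "\<lambda>xs. ?S xs * ?t xs"]) (intro dep_mult dS' dt)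
    have it2: "integrable M (\<lambda>\<omega>. (?t (path \<omega>))\<^sup>2)"
      by (rule dep_integrable[of "Suc m" "\<lambda>xs. (?t xs)\<^sup>2"]) (intro dep_pow2 dt)
    have "(\<integral>\<omega>. (\<Sum>k\<in>{n..<Suc m}. c k (path \<omega>) * trm k (path \<omega>))\<^sup>2 \<partial>M)
        = (\<integral>\<omega>. (?S (path \<omega>))\<^sup>2 + 2 * (?S (path \<omega>) * ?t (path \<omega>)) + (?t (path \<omega>))\<^sup>2 \<partial>M)"
    proof -
      have pw: "\<And>x y::real. (x+y)\<^sup>2 = x\<^sup>2 + 2*(x*y) + y\<^sup>2" by (simp add: power2_sum)
      show ?thesis by (simp only: split pw)
    qed
    also have "\<dots> = (\<integral>\<omega>. (?S (path \<omega>))\<^sup>2 \<partial>M) + 2 * (\<integral>\<omega>. ?S (path \<omega>) * ?t (path \<omega>) \<partial>M) + (\<integral>\<omega>. (?t (path \<omega>))\<^sup>2 \<partial>M)"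
      using iS2 iSt it2 by simp
    also have "\<dots> \<le> C\<^sup>2 * (\<Sum>k\<in>{n..<m}. (al k)\<^sup>2) + 2 * 0 + C\<^sup>2 * (al m)\<^sup>2"
    proof (intro add_mono)
      show "(\<integral>\<omega>. (?S (path \<omega>))\<^sup>2 \<partial>M) \<le> C\<^sup>2 * (\<Sum>k\<in>{n..<m}. (al k)\<^sup>2)" using Suc.IH by simp
      show "2 * (\<integral>\<omega>. ?S (path \<omega>) * ?t (path \<omega>) \<partial>M) \<le> 2 * 0" using cross by simp
      have "(\<integral>\<omega>. (?t (path \<omega>))\<^sup>2 \<partial>M) \<le> (\<integral>\<omega>. C\<^sup>2 * (al m)\<^sup>2 \<partial>M)"
        by (rule integral_mono[OF it2]) (auto intro: tb)
      then show "(\<integral>\<omega>. (?t (path \<omega>))\<^sup>2 \<partial>M) \<le> C\<^sup>2 * (al m)\<^sup>2" by (simp add: prob_space)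
    qed
    also have "\<dots> = C\<^sup>2 * (\<Sum>k\<in>{n..<Suc m}. (al k)\<^sup>2)"
      using False by (simp add: algebra_simps)
    finally show ?thesis .
  qed
qed

definition D :: "nat \<Rightarrow> nat \<Rightarrow> (nat \<Rightarrow> 'z) \<Rightarrow> real" where
  "D n j xs = (\<Sum>k\<in>{n..<j}. trm k xs)"

lemma D_dep: "dep j (D n j)"
  unfolding D_def by (intro dep_sum trmdep) auto

lemma kolmogorov:
  assumes eps: "0 < \<epsilon>"
  shows "prob {\<omega>\<in>space M. \<exists>j\<in>{n..m}. \<epsilon> \<le> \<bar>D n j (path \<omega>)\<bar>} \<le> C\<^sup>2 * (\<Sum>k\<in>{n..<m}. (al k)\<^sup>2) / \<epsilon>\<^sup>2"
proof -
  define c where "c k xs = (if \<forall>i\<in>{n..k}. \<bar>D n i xs\<bar> < \<epsilon> then 1 else 0::real)" for k xs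
  have c_dep: "dep k (c k)" for k
    unfolding dep_def[of k "c k"]
  proof (intro allI impI)
    fix xs ys :: "nat \<Rightarrow> 'z" assume h: "\<forall>j<k. xs j = ys j"
    have "D n i xs = D n i ys" if "i \<in> {n..k}" for i
      by (rule depD[OF dep_mono[OF D_dep]]) (use that h in auto)
    then show "c k xs = c k ys" unfolding c_def by auto
  qed
  have c_bnd: "\<bar>c k xs\<bar> \<le> 1" for k xs unfolding c_def by auto
  define SS where "SS xs = (\<Sum>k\<in>{n..<m}. c k xs * trm k xs)" for xs
  have key: "\<epsilon>\<^sup>2 \<le> (SS xs)\<^sup>2" if ex: "\<exists>j\<in>{n..m}. \<epsilon> \<le> \<bar>D n j xs\<bar>" for xs
  proof -
    define j0 where "j0 = (LEAST j. n \<le> j \<and> \<epsilon> \<le> \<bar>D n j xs\<bar>)"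
    obtain j where j: "j \<in> {n..m}" "\<epsilon> \<le> \<bar>D n j xs\<bar>" using ex by blast
    have P0: "n \<le> j0 \<and> \<epsilon> \<le> \<bar>D n j0 xs\<bar>" unfolding j0_def
      by (rule LeastI[of _ j]) (use j in auto)
    have "j0 \<le> j" unfolding j0_def by (rule Least_le) (use j in auto)
    then have j0m: "j0 \<le> m" using j by auto
    have below: "\<bar>D n i xs\<bar> < \<epsilon>" if "n \<le> i" "i < j0" for i
      using not_less_Least[of i "\<lambda>j. n \<le> j \<and> \<epsilon> \<le> \<bar>D n j xs\<bar>"] that unfolding j0_def by auto
    have ck: "c k xs = (if k < j0 then 1 else 0)" if "n \<le> k" for k
    proof (cases "k < j0")
      case True
      then show ?thesis using below unfolding c_def by auto
    next
      case False
      then have "j0 \<in> {n..k}" using P0 by auto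
      then show ?thesis using False P0 unfolding c_def by force
    qed
    have "SS xs = (\<Sum>k\<in>{n..<m}. if k < j0 then trm k xs else 0)"
      unfolding SS_def by (rule sum.cong[OF refl]) (simp add: ck)
    also have "\<dots> = (\<Sum>k\<in>{n..<j0}. trm k xs)"
    proof -
      have "(\<Sum>k\<in>{n..<m}. if k < j0 then trm k xs else 0) = (\<Sum>k\<in>{k\<in>{n..<m}. k < j0}. trm k xs)"
        by (rule sum.inter_filter[symmetric]) simp
      also have "{k\<in>{n..<m}. k < j0} = {n..<j0}" using j0m by auto
      finally show ?thesis .
    qed
    also have "\<dots> = D n j0 xs" by (simp add: D_def)
    finally have "SS xs = D n j0 xs" .
    then have "\<epsilon> \<le> \<bar>SS xs\<bar>" using P0 by simp
    then show ?thesis using eps by (metis abs_le_square_iff abs_of_pos)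
  qed
  have dSS: "dep m SS"
    unfolding SS_def by (intro dep_sum dep_mult dep_mono[OF c_dep] trmdep) auto
  have iSS: "integrable M (\<lambda>\<omega>. (SS (path \<omega>))\<^sup>2)"
    by (rule dep_integrable) (rule dep_pow2[OF dSS])
  have "prob {\<omega>\<in>space M. \<exists>j\<in>{n..m}. \<epsilon> \<le> \<bar>D n j (path \<omega>)\<bar>} \<le> prob {\<omega>\<in>space M. \<epsilon>\<^sup>2 \<le> (SS (path \<omega>))\<^sup>2}"
  proof (rule finite_measure_mono)
    show "{\<omega>\<in>space M. \<exists>j\<in>{n..m}. \<epsilon> \<le> \<bar>D n j (path \<omega>)\<bar>} \<subseteq> {\<omega>\<in>space M. \<epsilon>\<^sup>2 \<le> (SS (path \<omega>))\<^sup>2}"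
      using key by blast
    have "dep m (\<lambda>xs. \<epsilon>\<^sup>2 \<le> (SS xs)\<^sup>2)" using dSS by (rule dep_comp)
    then show "{\<omega>\<in>space M. \<epsilon>\<^sup>2 \<le> (SS (path \<omega>))\<^sup>2} \<in> sets M" by (rule dep_sets)
  qed
  also have "\<dots> \<le> (\<integral>\<omega>. (SS (path \<omega>))\<^sup>2 \<partial>M) / \<epsilon>\<^sup>2"
    by (rule integral_Markov_inequality_measure[OF iSS, of "space M"]) (use eps in auto)
  also have "\<dots> \<le> C\<^sup>2 * (\<Sum>k\<in>{n..<m}. (al k)\<^sup>2) / \<epsilon>\<^sup>2"
    using var_bound[OF c_dep c_bnd, of n m] eps unfolding SS_def by (simp add: divide_right_mono)
  finally show ?thesis .
qed

lemma D_eq: "n \<le> j \<Longrightarrow> D n j xs = (\<Sum>k<j. trm k xs) - (\<Sum>k<n. trm k xs)"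
  unfolding D_def using sum_diff_nat_ivl[of 0 n j "\<lambda>k. trm k xs"] by (simp add: atLeast0LessThan)

lemma as_conv:
  assumes sq: "summable (\<lambda>k. (al k)\<^sup>2)"
  shows "AE \<omega> in M. convergent (\<lambda>m. \<Sum>k<m. trm k (path \<omega>))"
proof -
  define T where "T n = (\<Sum>k. (al (k + n))\<^sup>2)" for n
  have T0: "T \<longlonglongrightarrow> 0" unfolding T_def by (rule tail_zero[OF sq])
  define U where "U \<epsilon> n = {\<omega>\<in>space M. \<exists>j\<ge>n. \<epsilon> \<le> \<bar>D n j (path \<omega>)\<bar>}" for \<epsilon> n
  define A where "A \<epsilon> n m = {\<omega>\<in>space M. \<exists>j\<in>{n..m}. \<epsilon> \<le> \<bar>D n j (path \<omega>)\<bar>}" for \<epsilon> n m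
  have A_sets: "A \<epsilon> n m \<in> sets M" for \<epsilon> n m
  proof -
    have "dep m (\<lambda>xs. \<exists>j\<in>{n..m}. \<epsilon> \<le> \<bar>D n j xs\<bar>)"
      unfolding dep_def[of m "\<lambda>xs. \<exists>j\<in>{n..m}. \<epsilon> \<le> \<bar>D n j xs\<bar>"]
    proof (intro allI impI)
      fix xs ys :: "nat \<Rightarrow> 'z" assume h: "\<forall>j<m. xs j = ys j"
      have "D n j xs = D n j ys" if "j \<in> {n..m}" for j
        by (rule depD[OF dep_mono[OF D_dep]]) (use that h in auto)
      then show "(\<exists>j\<in>{n..m}. \<epsilon> \<le> \<bar>D n j xs\<bar>) = (\<exists>j\<in>{n..m}. \<epsilon> \<le> \<bar>D n j ys\<bar>)" by auto
    qed
    then show ?thesis unfolding A_def by (rule dep_sets)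
  qed
  have UA: "U \<epsilon> n = (\<Union>m. A \<epsilon> n m)" for \<epsilon> n unfolding U_def A_def by (auto 4 3 intro: atLeastAtMost_iff[THEN iffD2])
  have U_sets: "U \<epsilon> n \<in> sets M" for \<epsilon> n unfolding UA using A_sets by auto
  have U_prob: "prob (U \<epsilon> n) \<le> C\<^sup>2 * T n / \<epsilon>\<^sup>2" if eps: "0 < \<epsilon>" for \<epsilon> n
  proof -
    have "(\<lambda>m. prob (A \<epsilon> n m)) \<longlonglongrightarrow> prob (\<Union>m. A \<epsilon> n m)"
    proof (rule finite_Lim_measure_incseq)
      show "range (A \<epsilon> n) \<subseteq> sets M" using A_sets by auto
      show "incseq (A \<epsilon> n)"
      proof (rule incseq_SucI)
        fix m show "A \<epsilon> n m \<subseteq> A \<epsilon> n (Suc m)" unfolding A_def by force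
      qed
    qed
    moreover have "prob (A \<epsilon> n m) \<le> C\<^sup>2 * T n / \<epsilon>\<^sup>2" for m
    proof -
      have "prob (A \<epsilon> n m) \<le> C\<^sup>2 * (\<Sum>k\<in>{n..<m}. (al k)\<^sup>2) / \<epsilon>\<^sup>2"
        unfolding A_def by (rule kolmogorov[OF eps])
      also have "\<dots> \<le> C\<^sup>2 * T n / \<epsilon>\<^sup>2"
        unfolding T_def using tail_bound[OF sq, of n m]
        by (intro divide_right_mono mult_left_mono) auto
      finally show ?thesis .
    qed
    ultimately show ?thesis unfolding UA by (intro LIMSEQ_le_const2) auto
  qed
  define N where "N l = (\<Inter>n. U (inverse (real (Suc l))) n)" for l
  have N_null: "N l \<in> null_sets M" for l
  proof -
    let ?e = "inverse (real (Suc l))"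
    have e: "0 < ?e" by simp
    have Ns: "N l \<in> sets M" unfolding N_def using U_sets by auto
    have le: "prob (N l) \<le> C\<^sup>2 * T n / ?e\<^sup>2" for n
    proof -
      have "prob (N l) \<le> prob (U ?e n)"
        by (rule finite_measure_mono) (auto simp: N_def U_sets)
      then show ?thesis using U_prob[OF e, of n] by linarith
    qed
    have "(\<lambda>n. C\<^sup>2 * T n / ?e\<^sup>2) \<longlonglongrightarrow> C\<^sup>2 * 0 / ?e\<^sup>2"
      by (intro tendsto_divide tendsto_mult tendsto_const T0) simp
    then have "prob (N l) \<le> C\<^sup>2 * 0 / ?e\<^sup>2" by (rule LIMSEQ_le_const) (use le in blast)
    then have "prob (N l) = 0" using measure_nonneg[of M "N l"] by linarith
    then show ?thesis using Ns by (intro null_setsI) (simp_all add: emeasure_eq_measure)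
  qed
  have "AE \<omega> in M. \<forall>l. \<omega> \<notin> N l"
    by (subst AE_all_countable) (intro allI AE_not_in N_null)
  moreover have "AE \<omega> in M. \<omega> \<in> space M" by (rule AE_space)
  ultimately show ?thesis
  proof eventually_elim
    case (elim \<omega>)
    then have om: "\<omega> \<in> space M" and nN: "\<forall>l. \<omega> \<notin> N l" by auto
      let ?S = "\<lambda>m. \<Sum>k<m. trm k (path \<omega>)"
      have good: "\<exists>n. \<forall>j\<ge>n. \<bar>D n j (path \<omega>)\<bar> < inverse (real (Suc l))" for l
      proof -
        obtain n where "\<omega> \<notin> U (inverse (real (Suc l))) n" using nN unfolding N_def by blast
        then have "\<forall>j\<ge>n. \<bar>D n j (path \<omega>)\<bar> < inverse (real (Suc l))" using om unfolding U_def by (auto simp: not_le) (meson leD)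
        then show ?thesis by blast
      qed
      have "Cauchy ?S"
        unfolding Cauchy_iff2
      proof
        fix j
        obtain n where n: "\<forall>i\<ge>n. \<bar>D n i (path \<omega>)\<bar> < inverse (real (Suc (2 * j + 1)))"
          using good by blast
        have inv: "inverse (real (Suc (2 * j + 1))) = inverse (real (Suc j)) / 2"
          by (simp add: field_simps)
        show "\<exists>M. \<forall>m\<ge>M. \<forall>n\<ge>M. \<bar>?S m - ?S n\<bar> < inverse (real (Suc j))"
        proof (intro exI allI impI)
          fix m m' assume "n \<le> m" "n \<le> m'"
          then have "\<bar>D n m (path \<omega>)\<bar> < inverse (real (Suc j)) / 2" "\<bar>D n m' (path \<omega>)\<bar> < inverse (real (Suc j)) / 2"
            using n inv by auto
          moreover have "?S m - ?S m' = D n m (path \<omega>) - D n m' (path \<omega>)"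
            using D_eq \<open>n \<le> m\<close> \<open>n \<le> m'\<close> by simp
          ultimately show "\<bar>?S m - ?S m'\<bar> < inverse (real (Suc j))" by linarith
        qed
      qed
      then show "convergent ?S" by (simp add: Cauchy_convergent)
  qed
qed

lemma as_conv2:
  assumes sq: "summable (\<lambda>k. (al k)\<^sup>2)"
  shows "AE \<omega> in M. convergent (\<lambda>m. \<Sum>k<m. al k * phi k (path \<omega>) (X k \<omega>))"
  using as_conv[OF sq] by (simp add: trm_def path_def)

end
end


lemma unbounded_sums:
  fixes f :: "nat \<Rightarrow> real"
  assumes nn: "\<And>k. 0 \<le> f k" and ns: "\<not> summable f"
  shows "\<exists>n. B \<le> (\<Sum>k\<in>{K..<n}. f k)"
proof (rule ccontr)
  assume "\<not> ?thesis"
  then have lt: "\<And>n. (\<Sum>k\<in>{K..<n}. f k) < B" by (simp add: not_le)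
  have "(\<Sum>i<n. f i) \<le> (\<Sum>i<K. f i) + B" for n
  proof (cases "K \<le> n")
    case True
    have "(\<Sum>i<n. f i) = (\<Sum>i<K. f i) + (\<Sum>k\<in>{K..<n}. f k)"
      using sum.atLeastLessThan_concat[of 0 K n f] True by (simp add: atLeast0LessThan)
    then show ?thesis using lt[of n] by linarith
  next
    case False
    have "(\<Sum>i<n. f i) \<le> (\<Sum>i<K. f i)" using False by (intro sum_mono2) (auto intro: nn)
    moreover have "0 \<le> B" using lt[of 0] by simp
    ultimately show ?thesis by linarith
  qed
  then have "summable f" by (intro summableI_nonneg_bounded[OF nn])
  then show False using ns by simp
qed

lemma V_conv:
  fixes V E al :: "nat \<Rightarrow> real" and \<epsilon> :: real
  assumes V0: "\<And>k. 0 \<le> V k" and eps: "0 < \<epsilon>"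
    and rec: "\<And>k. K \<le> k \<Longrightarrow> V (Suc k) \<le> (1 - \<epsilon> * al k) * V k + al k * E k"
    and al0: "\<And>k. 0 \<le> al k" and al1: "\<And>k. K \<le> k \<Longrightarrow> \<epsilon> * al k \<le> 1"
    and E0: "E \<longlonglongrightarrow> 0" and ns: "\<not> summable al"
  shows "V \<longlonglongrightarrow> 0"
proof (rule LIMSEQ_I)
  fix r :: real assume r: "0 < r"
  define \<eta> where "\<eta> = r / 2"
  have eta: "0 < \<eta>" using r by (simp add: \<eta>_def)
  obtain K1 where K1: "\<And>k. K1 \<le> k \<Longrightarrow> norm (E k - 0) < \<epsilon> * \<eta>"
    using LIMSEQ_D[OF E0, of "\<epsilon> * \<eta>"] eps eta by auto
  define K2 where "K2 = max K K1"
  define W where "W k = max (V k - \<eta>) 0" for k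
  have W0: "0 \<le> W k" for k by (simp add: W_def)
  have step: "W (Suc k) \<le> (1 - \<epsilon> * al k) * W k" if k: "K2 \<le> k" for k
  proof -
    have a1: "0 \<le> 1 - \<epsilon> * al k" using al1[of k] k by (simp add: K2_def)
    have "E k < \<epsilon> * \<eta>" using K1[of k] k by (simp add: K2_def)
    then have "al k * E k \<le> al k * (\<epsilon> * \<eta>)" using al0[of k] by (intro mult_left_mono) auto
    then have "V (Suc k) - \<eta> \<le> (1 - \<epsilon> * al k) * (V k - \<eta>)"
      using rec[of k] k by (simp add: K2_def algebra_simps)
    also have "\<dots> \<le> (1 - \<epsilon> * al k) * W k"
      using a1 by (intro mult_left_mono) (auto simp: W_def)
    finally have "V (Suc k) - \<eta> \<le> (1 - \<epsilon> * al k) * W k" .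
    moreover have "0 \<le> (1 - \<epsilon> * al k) * W k" using a1 W0 by simp
    ultimately show ?thesis by (simp add: W_def)
  qed
  have iter: "W (K2 + i) \<le> W K2 * exp (- \<epsilon> * (\<Sum>k\<in>{K2..<K2 + i}. al k))" for i
  proof (induction i)
    case 0
    then show ?case by simp
  next
    case (Suc i)
    have "W (K2 + Suc i) \<le> (1 - \<epsilon> * al (K2 + i)) * W (K2 + i)"
      using step[of "K2 + i"] by simp
    also have "\<dots> \<le> exp (- (\<epsilon> * al (K2 + i))) * W (K2 + i)"
    proof (rule mult_right_mono)
      show "1 - \<epsilon> * al (K2 + i) \<le> exp (- (\<epsilon> * al (K2 + i)))"
        using exp_ge_add_one_self[of "- (\<epsilon> * al (K2 + i))"] by simp
    qed (rule W0)
    also have "\<dots> \<le> exp (- (\<epsilon> * al (K2 + i))) * (W K2 * exp (- \<epsilon> * (\<Sum>k\<in>{K2..<K2 + i}. al k)))"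
      by (intro mult_left_mono Suc.IH) simp
    also have "\<dots> = W K2 * exp (- \<epsilon> * (\<Sum>k\<in>{K2..<K2 + Suc i}. al k))"
      by (simp add: algebra_simps exp_add[symmetric])
    finally show ?case .
  qed
  define B where "B = W K2"
  obtain n1 where n1: "(B / \<eta> + 1) / \<epsilon> \<le> (\<Sum>k\<in>{K2..<n1}. al k)"
    using unbounded_sums[OF al0 ns] by blast
  show "\<exists>no. \<forall>n\<ge>no. norm (V n - 0) < r"
  proof (intro exI allI impI)
    fix m assume m: "max n1 K2 \<le> m"
    define y where "y = \<epsilon> * (\<Sum>k\<in>{K2..<m}. al k)"
    have "(\<Sum>k\<in>{K2..<n1}. al k) \<le> (\<Sum>k\<in>{K2..<m}. al k)"
      using m by (intro sum_mono2) (auto intro: al0)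
    then have "(B / \<eta> + 1) / \<epsilon> \<le> (\<Sum>k\<in>{K2..<m}. al k)" using n1 by linarith
    then have y1: "B / \<eta> + 1 \<le> y" using eps unfolding y_def by (simp add: field_simps)
    have B0: "0 \<le> B" by (simp add: B_def W0)
    have "0 \<le> B / \<eta>" using B0 eta by simp
    then have y0: "1 \<le> y" using y1 by linarith
    have "W m = W (K2 + (m - K2))" using m by simp
    also have "\<dots> \<le> B * exp (- y)" using iter[of "m - K2"] m by (simp add: B_def y_def)
    also have "\<dots> = B / exp y" by (simp add: exp_minus field_simps)
    also have "\<dots> \<le> B / (1 + y)"
    proof (rule divide_left_mono)
      show "1 + y \<le> exp y" by simp
      show "0 \<le> B" by (rule B0)
      show "0 < exp y * (1 + y)" using y0 by (intro mult_pos_pos) auto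
    qed
    also have "\<dots> < \<eta>"
    proof -
      have "0 < 1 + y" using y0 by simp
      moreover have "B < \<eta> * (1 + y)"
      proof -
        have "B / \<eta> < y" using y1 by simp
        then have "B < y * \<eta>" using eta by (simp add: field_simps)
        then show ?thesis using eta by (simp add: algebra_simps)
      qed
      ultimately show ?thesis by (simp add: field_simps)
    qed
    finally have "W m < \<eta>" .
    then have "V m < 2 * \<eta>" by (simp add: W_def)
    then show "norm (V m - 0) < r" using V0[of m] by (simp add: \<eta>_def)
  qed
qed


lemma ineqA:
  fixes a amin x y V g \<rho> e t :: real
  assumes "0 \<le> amin" "amin \<le> a" "a \<le> 1" "0 \<le> x" "x \<le> \<rho> * V" "0 \<le> y" "y \<le> V" "0 \<le> g"
    "g \<le> \<rho> * \<rho>" "0 < \<rho>" "\<rho> < 1" "0 \<le> e" "g \<le> 1"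
    "t \<le> (1 - a) * x + a * (g * (y + e) + e)"
  shows "t / \<rho> \<le> (1 - amin * (1 - \<rho>)) * V + a * (2 * e / \<rho>)"
proof -
  have V0: "0 \<le> V" using assms by linarith
  have h1: "(1 - a) * x / \<rho> \<le> (1 - a) * V"
  proof -
    have "x / \<rho> \<le> V" using assms by (simp add: field_simps)
    then have "(1 - a) * (x / \<rho>) \<le> (1 - a) * V" using assms by (intro mult_left_mono) auto
    then show ?thesis by simp
  qed
  have h2: "a * (g * y) / \<rho> \<le> a * (\<rho> * V)"
  proof -
    have "g * y \<le> (\<rho> * \<rho>) * V" using assms by (intro mult_mono) auto
    then have "g * y / \<rho> \<le> \<rho> * V" using assms by (simp add: field_simps)
    then have "a * (g * y / \<rho>) \<le> a * (\<rho> * V)" using assms by (intro mult_left_mono) auto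
    then show ?thesis by simp
  qed
  have h3: "a * (g * e + e) / \<rho> \<le> a * (2 * e / \<rho>)"
  proof -
    have "g * e \<le> 1 * e" using assms by (intro mult_right_mono) auto
    then have "g * e + e \<le> 2 * e" by simp
    then have "(g * e + e) / \<rho> \<le> 2 * e / \<rho>" using assms by (simp add: divide_right_mono)
    then have "a * ((g * e + e) / \<rho>) \<le> a * (2 * e / \<rho>)" using assms by (intro mult_left_mono) auto
    then show ?thesis by simp
  qed
  have h4: "amin * (1 - \<rho>) * V \<le> a * (1 - \<rho>) * V"
    using assms V0 by (intro mult_right_mono) auto
  have "t / \<rho> \<le> ((1 - a) * x + a * (g * (y + e) + e)) / \<rho>"
    using assms by (simp add: divide_right_mono)
  also have "\<dots> = (1 - a) * x / \<rho> + a * (g * y) / \<rho> + a * (g * e + e) / \<rho>"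
    using assms by (simp add: field_simps)
  also have "\<dots> \<le> (1 - a) * V + a * (\<rho> * V) + a * (2 * e / \<rho>)"
    using h1 h2 h3 by linarith
  also have "\<dots> = V - a * (1 - \<rho>) * V + a * (2 * e / \<rho>)" by (simp add: algebra_simps)
  also have "\<dots> \<le> V - amin * (1 - \<rho>) * V + a * (2 * e / \<rho>)" using h4 by linarith
  also have "\<dots> = (1 - amin * (1 - \<rho>)) * V + a * (2 * e / \<rho>)" by (simp add: algebra_simps)
  finally show ?thesis .
qed

lemma ineqB:
  fixes b bmin x y V \<rho> e t :: real
  assumes "0 \<le> bmin" "bmin \<le> b" "b \<le> 1" "0 \<le> x" "x \<le> \<rho> * V" "0 \<le> y" "y \<le> V"
    "0 < \<rho>" "\<rho> < 1" "0 \<le> e"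
    "t \<le> (1 - b) * y + b * (x + e)"
  shows "t \<le> (1 - bmin * (1 - \<rho>)) * V + b * e"
proof -
  have V0: "0 \<le> V" using assms by linarith
  have h1: "(1 - b) * y \<le> (1 - b) * V" using assms by (intro mult_left_mono) auto
  have h2: "b * x \<le> b * (\<rho> * V)" using assms by (intro mult_left_mono) auto
  have h4: "bmin * (1 - \<rho>) * V \<le> b * (1 - \<rho>) * V"
    using assms V0 by (intro mult_right_mono) auto
  have "t \<le> (1 - b) * V + b * (\<rho> * V) + b * e" using assms h1 h2 by (simp add: algebra_simps)
  also have "\<dots> = V - b * (1 - \<rho>) * V + b * e" by (simp add: algebra_simps)
  also have "\<dots> \<le> V - bmin * (1 - \<rho>) * V + b * e" using h4 by linarith
  also have "\<dots> = (1 - bmin * (1 - \<rho>)) * V + b * e" by (simp add: algebra_simps)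
  finally show ?thesis .
qed


definition mx :: "('p::finite \<Rightarrow> real) \<Rightarrow> real" where
  "mx f = Max (range f)"

lemma mx_ge: "f p \<le> mx (f :: 'p::finite \<Rightarrow> real)"
  unfolding mx_def by (rule Max_ge) auto

lemma mx_le: "(\<And>p. f p \<le> B) \<Longrightarrow> mx (f :: 'p::finite \<Rightarrow> real) \<le> B"
  unfolding mx_def by (subst Max_le_iff) auto

lemma det_conv:
  fixes QA QB wA wB :: "nat \<Rightarrow> 's::finite \<Rightarrow> 'a::finite \<Rightarrow> real" and Qs d :: "'s \<Rightarrow> 'a \<Rightarrow> real"
    and T :: "('s \<Rightarrow> 'a \<Rightarrow> real) \<Rightarrow> 's \<Rightarrow> 'a \<Rightarrow> real" and al :: "nat \<Rightarrow> real" and g be :: real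
  assumes g0: "0 \<le> g" and g1: "g < 1" and be: "0 < be"
    and d0: "\<And>s a. 0 < d s a" and d1: "\<And>s a. d s a \<le> 1"
    and al0: "\<And>k. 0 \<le> al k" and K: "\<And>k. K \<le> k \<Longrightarrow> al k \<le> 1 \<and> al k * be \<le> 1" and ns: "\<not> summable al"
    and Tlip: "\<And>Q Q' B s a. (\<And>s' a'. \<bar>Q s' a' - Q' s' a'\<bar> \<le> B) \<Longrightarrow> \<bar>T Q s a - T Q' s a\<bar> \<le> g * B"
    and Tfix: "T Qs = Qs"
    and recA: "\<And>k s a. QA (Suc k) s a = QA k s a + al k * d s a * (T (QB k) s a - QA k s a) + al k * wA k s a"
    and recB: "\<And>k s a. QB (Suc k) s a = QB k s a + al k * be * d s a * (QA k s a - QB k s a) + al k * wB k s a"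
    and cA: "\<And>s a. convergent (\<lambda>n. \<Sum>k<n. al k * wA k s a)"
    and cB: "\<And>s a. convergent (\<lambda>n. \<Sum>k<n. al k * wB k s a)"
  shows "(\<lambda>k. QA k s a) \<longlonglongrightarrow> Qs s a \<and> (\<lambda>k. QB k s a) \<longlonglongrightarrow> Qs s a"
proof -
  define uA where "uA k s a = lim (\<lambda>n. \<Sum>k<n. al k * wA k s a) - (\<Sum>j<k. al j * wA j s a)" for k s a
  define uB where "uB k s a = lim (\<lambda>n. \<Sum>k<n. al k * wB k s a) - (\<Sum>j<k. al j * wB j s a)" for k s a
  have uA0: "(\<lambda>k. uA k s a) \<longlonglongrightarrow> 0" for s a
  proof -
    have "(\<lambda>k. uA k s a) \<longlonglongrightarrow> lim (\<lambda>n. \<Sum>k<n. al k * wA k s a) - lim (\<lambda>n. \<Sum>k<n. al k * wA k s a)"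
      unfolding uA_def by (intro tendsto_diff tendsto_const cA[unfolded convergent_LIMSEQ_iff])
    then show ?thesis by simp
  qed
  have uB0: "(\<lambda>k. uB k s a) \<longlonglongrightarrow> 0" for s a
  proof -
    have "(\<lambda>k. uB k s a) \<longlonglongrightarrow> lim (\<lambda>n. \<Sum>k<n. al k * wB k s a) - lim (\<lambda>n. \<Sum>k<n. al k * wB k s a)"
      unfolding uB_def by (intro tendsto_diff tendsto_const cB[unfolded convergent_LIMSEQ_iff])
    then show ?thesis by simp
  qed
  have uA_step: "uA k s a = al k * wA k s a + uA (Suc k) s a" for k s a
    unfolding uA_def by simp
  have uB_step: "uB k s a = al k * wB k s a + uB (Suc k) s a" for k s a
    unfolding uB_def by simp
  define e where "e k = (\<Sum>p\<in>UNIV. \<bar>uA k (fst p) (snd p)\<bar> + \<bar>uB k (fst p) (snd p)\<bar>)" for k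
  have e0: "e \<longlonglongrightarrow> 0"
  proof -
    have "e \<longlonglongrightarrow> (\<Sum>p\<in>(UNIV::('s\<times>'a) set). 0 + 0)"
      unfolding e_def
      by (intro tendsto_sum tendsto_add tendsto_rabs_zero uA0 uB0)
    then show ?thesis by simp
  qed
  have ue: "\<bar>uA k s a\<bar> + \<bar>uB k s a\<bar> \<le> e k" for k s a
  proof -
    have "\<bar>uA k (fst (s,a)) (snd (s,a))\<bar> + \<bar>uB k (fst (s,a)) (snd (s,a))\<bar> \<le> e k"
      unfolding e_def by (rule member_le_sum) auto
    then show ?thesis by simp
  qed
  have e_nn: "0 \<le> e k" for k unfolding e_def by (intro sum_nonneg) auto
  define ZA where "ZA k s a = QA k s a + uA k s a" for k s a
  define ZB where "ZB k s a = QB k s a + uB k s a" for k s a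
  have ZA_rec: "ZA (Suc k) s a = ZA k s a + al k * d s a * (T (QB k) s a - ZA k s a + uA k s a)" for k s a
    unfolding ZA_def using recA[of k s a] uA_step[of k s a] by (simp add: algebra_simps)
  have ZB_rec: "ZB (Suc k) s a = ZB k s a + al k * be * d s a * ((ZA k s a - uA k s a) - (ZB k s a - uB k s a))" for k s a
    unfolding ZB_def ZA_def using recB[of k s a] uB_step[of k s a] by (simp add: algebra_simps)
  define EA where "EA k = mx (\<lambda>p. \<bar>ZA k (fst p) (snd p) - Qs (fst p) (snd p)\<bar>)" for k
  define EB where "EB k = mx (\<lambda>p. \<bar>ZB k (fst p) (snd p) - Qs (fst p) (snd p)\<bar>)" for k
  have EA_ge: "\<bar>ZA k s a - Qs s a\<bar> \<le> EA k" for k s a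
    unfolding EA_def using mx_ge[of "\<lambda>p. \<bar>ZA k (fst p) (snd p) - Qs (fst p) (snd p)\<bar>" "(s,a)"] by simp
  have EB_ge: "\<bar>ZB k s a - Qs s a\<bar> \<le> EB k" for k s a
    unfolding EB_def using mx_ge[of "\<lambda>p. \<bar>ZB k (fst p) (snd p) - Qs (fst p) (snd p)\<bar>" "(s,a)"] by simp
  define \<rho> where "\<rho> = (1 + g) / 2"
  have rho0: "0 < \<rho>" and rho1: "\<rho> < 1" using g0 g1 by (auto simp: \<rho>_def)
  have g_rho: "g \<le> \<rho> * \<rho>"
  proof -
    have "0 \<le> ((1 - g) / 2)\<^sup>2" by simp
    then show ?thesis unfolding \<rho>_def by (simp add: power2_eq_square field_simps)
  qed
  define V where "V k = max (EA k / \<rho>) (EB k)" for k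
  have EA_V: "EA k \<le> \<rho> * V k" for k
  proof -
    have "EA k / \<rho> \<le> V k" by (simp add: V_def)
    then show ?thesis using rho0 by (simp add: field_simps)
  qed
  have EB_V: "EB k \<le> V k" for k by (simp add: V_def)
  have EA0: "0 \<le> EA k" for k by (rule order.trans[OF abs_ge_zero EA_ge])
  have EB0: "0 \<le> EB k" for k by (rule order.trans[OF abs_ge_zero EB_ge])
  have V0: "0 \<le> V k" for k using EB0[of k] EB_V[of k] by linarith
  define dmin where "dmin = Min (range (\<lambda>p. d (fst p) (snd p)))"
  have dmin_le: "dmin \<le> d s a" for s a
  proof -
    have "dmin \<le> d (fst (s,a)) (snd (s,a))" unfolding dmin_def by (rule Min_le) (simp, rule rangeI)
    then show ?thesis by simp
  qed
  have dmin0: "0 < dmin" unfolding dmin_def by (subst Min_gr_iff) (auto intro: d0)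
  have dmin1: "dmin \<le> 1" using dmin_le[of undefined undefined] d1[of undefined undefined] by linarith
  define \<epsilon> where "\<epsilon> = dmin * min 1 be * (1 - \<rho>)"
  have eps0: "0 < \<epsilon>" unfolding \<epsilon>_def using dmin0 be rho1 by auto
  define E where "E k = 2 * e k / \<rho> + be * e k" for k
  have E0: "E \<longlonglongrightarrow> 0"
  proof -
    have "E \<longlonglongrightarrow> 2 * 0 / \<rho> + be * 0" unfolding E_def
      by (intro tendsto_add tendsto_mult tendsto_divide tendsto_const e0) (use rho0 in auto)
    then show ?thesis by simp
  qed
  have main: "V (Suc k) \<le> (1 - \<epsilon> * al k) * V k + al k * E k" if kK: "K \<le> k" for k
  proof -
    have alk1: "al k \<le> 1" and albe: "al k * be \<le> 1" using K[OF kK] by auto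
    let ?R = "(1 - \<epsilon> * al k) * V k + al k * E k"
    define amin where "amin = al k * dmin * min 1 be"
    have amin0: "0 \<le> amin" unfolding amin_def using al0[of k] dmin0 be by auto
    have amin_eps: "amin * (1 - \<rho>) = \<epsilon> * al k" unfolding amin_def \<epsilon>_def by (simp add: algebra_simps)
    have A: "\<bar>ZA (Suc k) s a - Qs s a\<bar> / \<rho> \<le> ?R" for s a
    proof -
      let ?a = "al k * d s a"
      have a0: "0 \<le> ?a" using al0[of k] d0[of s a] by simp
      have a1: "?a \<le> al k" using al0[of k] d1[of s a] by (simp add: mult_left_le)
      have amin_a: "amin \<le> ?a"
      proof -
        have "dmin * min 1 be \<le> d s a * 1" using dmin_le[of s a] dmin0 be by (intro mult_mono) auto
        then show ?thesis unfolding amin_def using al0[of k] by (simp add: mult.assoc mult_left_mono)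
      qed
      have Tb: "\<bar>T (QB k) s a - T Qs s a\<bar> \<le> g * (EB k + e k)"
      proof (rule Tlip)
        fix s' a'
        have "\<bar>QB k s' a' - Qs s' a'\<bar> \<le> \<bar>ZB k s' a' - Qs s' a'\<bar> + \<bar>uB k s' a'\<bar>"
          unfolding ZB_def by linarith
        also have "\<dots> \<le> EB k + e k" using EB_ge[of k s' a'] ue[of k s' a'] by linarith
        finally show "\<bar>QB k s' a' - Qs s' a'\<bar> \<le> EB k + e k" .
      qed
      have eq: "ZA (Suc k) s a - Qs s a = (1 - ?a) * (ZA k s a - Qs s a) + ?a * ((T (QB k) s a - T Qs s a) + uA k s a)"
        using ZA_rec[of k s a] Tfix by (simp add: algebra_simps)
      have "\<bar>ZA (Suc k) s a - Qs s a\<bar> \<le> \<bar>(1 - ?a) * (ZA k s a - Qs s a)\<bar> + \<bar>?a * ((T (QB k) s a - T Qs s a) + uA k s a)\<bar>"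
        unfolding eq by (rule abs_triangle_ineq)
      also have "\<dots> = (1 - ?a) * \<bar>ZA k s a - Qs s a\<bar> + ?a * \<bar>(T (QB k) s a - T Qs s a) + uA k s a\<bar>"
        using a0 a1 alk1 d0[of s a] al0[of k] by (simp add: abs_mult)
      also have "\<dots> \<le> (1 - ?a) * \<bar>ZA k s a - Qs s a\<bar> + ?a * (g * (EB k + e k) + e k)"
      proof -
        have "\<bar>(T (QB k) s a - T Qs s a) + uA k s a\<bar> \<le> g * (EB k + e k) + e k"
          using Tb ue[of k s a] by linarith
        then show ?thesis using a0 by (simp add: mult_left_mono)
      qed
      finally have t: "\<bar>ZA (Suc k) s a - Qs s a\<bar> \<le> (1 - ?a) * \<bar>ZA k s a - Qs s a\<bar> + ?a * (g * (EB k + e k) + e k)" .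
      have "\<bar>ZA (Suc k) s a - Qs s a\<bar> / \<rho> \<le> (1 - amin * (1 - \<rho>)) * V k + ?a * (2 * e k / \<rho>)"
      proof (rule ineqA[OF amin0 amin_a _ _ _ EB0 EB_V g0 g_rho rho0 rho1 e_nn _ t])
        show "?a \<le> 1" using a1 alk1 by linarith
        show "0 \<le> \<bar>ZA k s a - Qs s a\<bar>" by simp
        show "\<bar>ZA k s a - Qs s a\<bar> \<le> \<rho> * V k" using EA_ge[of k s a] EA_V[of k] by linarith
        show "g \<le> 1" using g1 by simp
      qed
      also have "\<dots> \<le> (1 - \<epsilon> * al k) * V k + al k * (2 * e k / \<rho>)"
        unfolding amin_eps using a1 e_nn[of k] rho0 V0[of k] by (intro add_mono mult_right_mono) auto
      also have "\<dots> \<le> ?R"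
      proof -
        have "2 * e k / \<rho> \<le> E k" unfolding E_def using be e_nn[of k] by simp
        then have "al k * (2 * e k / \<rho>) \<le> al k * E k" by (intro mult_left_mono al0)
        then show ?thesis by linarith
      qed
      finally show ?thesis .
    qed
    have B: "\<bar>ZB (Suc k) s a - Qs s a\<bar> \<le> ?R" for s a
    proof -
      let ?b = "al k * be * d s a"
      have b0: "0 \<le> ?b" using al0[of k] d0[of s a] be by simp
      have b1: "?b \<le> al k * be" using al0[of k] d1[of s a] be by (simp add: mult_left_le)
      have bmin_b: "amin \<le> ?b"
      proof -
        have "dmin * min 1 be \<le> d s a * be" using dmin_le[of s a] dmin0 be by (intro mult_mono) auto
        then have "al k * (dmin * min 1 be) \<le> al k * (d s a * be)" using al0[of k] by (intro mult_left_mono) auto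
        then show ?thesis unfolding amin_def by (simp add: mult_ac)
      qed
      have eq: "ZB (Suc k) s a - Qs s a = (1 - ?b) * (ZB k s a - Qs s a) + ?b * ((ZA k s a - Qs s a) + (uB k s a - uA k s a))"
        using ZB_rec[of k s a] by (simp add: algebra_simps)
      have "\<bar>ZB (Suc k) s a - Qs s a\<bar> \<le> \<bar>(1 - ?b) * (ZB k s a - Qs s a)\<bar> + \<bar>?b * ((ZA k s a - Qs s a) + (uB k s a - uA k s a))\<bar>"
        unfolding eq by (rule abs_triangle_ineq)
      also have "\<dots> = (1 - ?b) * \<bar>ZB k s a - Qs s a\<bar> + ?b * \<bar>(ZA k s a - Qs s a) + (uB k s a - uA k s a)\<bar>"
        using b0 b1 albe d0[of s a] al0[of k] be by (simp add: abs_mult)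
      also have "\<dots> \<le> (1 - ?b) * \<bar>ZB k s a - Qs s a\<bar> + ?b * (\<bar>ZA k s a - Qs s a\<bar> + e k)"
      proof -
        have "\<bar>(ZA k s a - Qs s a) + (uB k s a - uA k s a)\<bar> \<le> \<bar>ZA k s a - Qs s a\<bar> + e k"
          using ue[of k s a] by linarith
        then show ?thesis using b0 by (simp add: mult_left_mono)
      qed
      finally have t: "\<bar>ZB (Suc k) s a - Qs s a\<bar> \<le> (1 - ?b) * \<bar>ZB k s a - Qs s a\<bar> + ?b * (\<bar>ZA k s a - Qs s a\<bar> + e k)" .
      have "\<bar>ZB (Suc k) s a - Qs s a\<bar> \<le> (1 - amin * (1 - \<rho>)) * V k + ?b * e k"
      proof (rule ineqB[OF amin0 bmin_b _ _ _ _ _ rho0 rho1 e_nn t])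
        show "?b \<le> 1" using b1 albe by linarith
        show "0 \<le> \<bar>ZA k s a - Qs s a\<bar>" by simp
        show "\<bar>ZA k s a - Qs s a\<bar> \<le> \<rho> * V k" using EA_ge[of k s a] EA_V[of k] by linarith
        show "0 \<le> \<bar>ZB k s a - Qs s a\<bar>" by simp
        show "\<bar>ZB k s a - Qs s a\<bar> \<le> V k" using EB_ge[of k s a] EB_V[of k] by linarith
      qed
      also have "\<dots> \<le> (1 - \<epsilon> * al k) * V k + al k * (be * e k)"
      proof -
        have "?b * e k \<le> (al k * be) * e k" using b1 e_nn[of k] by (intro mult_right_mono) auto
        then show ?thesis unfolding amin_eps by (simp add: mult.assoc)
      qed
      also have "\<dots> \<le> ?R"
      proof -
        have "be * e k \<le> E k" unfolding E_def using rho0 e_nn[of k] by simp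
        then have "al k * (be * e k) \<le> al k * E k" by (intro mult_left_mono al0)
        then show ?thesis by linarith
      qed
      finally show ?thesis .
    qed
    have "EA (Suc k) \<le> \<rho> * ?R"
      unfolding EA_def
    proof (rule mx_le)
      fix p
      have "\<bar>ZA (Suc k) (fst p) (snd p) - Qs (fst p) (snd p)\<bar> / \<rho> \<le> ?R" by (rule A)
      then show "\<bar>ZA (Suc k) (fst p) (snd p) - Qs (fst p) (snd p)\<bar> \<le> \<rho> * ?R" using rho0 by (simp add: field_simps)
    qed
    then have "EA (Suc k) / \<rho> \<le> ?R" using rho0 by (simp add: field_simps)
    moreover have "EB (Suc k) \<le> ?R" unfolding EB_def by (rule mx_le) (rule B)
    ultimately show ?thesis by (simp add: V_def)
  qed
  have Vc: "V \<longlonglongrightarrow> 0"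
  proof (rule V_conv[OF V0 eps0 main al0 _ E0 ns])
    fix k assume "K \<le> k"
    then have "al k \<le> 1" using K by auto
    moreover have "\<epsilon> \<le> 1"
    proof -
      have "min 1 be * (1 - \<rho>) \<le> 1 * 1" using rho0 rho1 be by (intro mult_mono) auto
      then have "dmin * (min 1 be * (1 - \<rho>)) \<le> 1 * 1" using dmin1 dmin0 rho1 be by (intro mult_mono) auto
      then show ?thesis unfolding \<epsilon>_def by (simp add: mult.assoc)
    qed
    ultimately show "\<epsilon> * al k \<le> 1" by (intro mult_le_one) (use al0[of k] in auto)
  qed simp
  have ZAc: "(\<lambda>k. ZA k s a - Qs s a) \<longlonglongrightarrow> 0"
  proof (rule Lim_null_comparison)
    show "\<forall>\<^sub>F k in sequentially. norm (ZA k s a - Qs s a) \<le> \<rho> * V k"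
    proof (rule always_eventually, rule allI)
      fix k show "norm (ZA k s a - Qs s a) \<le> \<rho> * V k" using EA_ge[of k s a] EA_V[of k] by simp
    qed
    show "(\<lambda>k. \<rho> * V k) \<longlonglongrightarrow> 0" using tendsto_mult[OF tendsto_const Vc, of \<rho>] by simp
  qed
  have ZBc: "(\<lambda>k. ZB k s a - Qs s a) \<longlonglongrightarrow> 0"
  proof (rule Lim_null_comparison)
    show "\<forall>\<^sub>F k in sequentially. norm (ZB k s a - Qs s a) \<le> V k"
    proof (rule always_eventually, rule allI)
      fix k show "norm (ZB k s a - Qs s a) \<le> V k" using EB_ge[of k s a] EB_V[of k] by simp
    qed
    show "V \<longlonglongrightarrow> 0" by (rule Vc)
  qed
  have "(\<lambda>k. (ZA k s a - Qs s a) - uA k s a + Qs s a) \<longlonglongrightarrow> 0 - 0 + Qs s a"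
    by (intro tendsto_add tendsto_diff ZAc uA0 tendsto_const)
  moreover have "(\<lambda>k. (ZB k s a - Qs s a) - uB k s a + Qs s a) \<longlonglongrightarrow> 0 - 0 + Qs s a"
    by (intro tendsto_add tendsto_diff ZBc uB0 tendsto_const)
  ultimately show ?thesis by (simp add: ZA_def ZB_def)
qed


lemma exp_point: "measure_pmf.expectation M (\<lambda>y. if y = z then c else 0) = pmf M z * (c::real)"
  by (subst integral_measure_pmf[of "{z}"]) (auto split: if_splits)

lemma pmf_sample: "pmf (sample_pmf p b P) (s, a, s') = pmf p s * pmf (b s) a * pmf (P s a) s'"
proof -
  have 1: "measure_pmf.expectation (P x xa) (\<lambda>xb. indicator {(s, a, s')} (x, xa, xb)) = (if x = s \<and> xa = a then pmf (P s a) s' else 0)" for x xa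
  proof (cases "x = s \<and> xa = a")
    case True
    then have "(\<lambda>xb. indicator {(s, a, s')} (x, xa, xb) :: real) = (\<lambda>xb. if xb = s' then 1 else 0)"
      by (auto simp: indicator_def)
    then show ?thesis using True exp_point[of "P s a" s' 1] by simp
  next
    case False
    then have "(\<lambda>xb. indicator {(s, a, s')} (x, xa, xb) :: real) = (\<lambda>xb. 0)"
      by (auto simp: indicator_def)
    then show ?thesis using False by auto
  qed
  have 2: "measure_pmf.expectation (b x) (\<lambda>xa. if x = s \<and> xa = a then c else 0) = (if x = s then pmf (b s) a * c else 0)" for x and c :: real
  proof (cases "x = s")
    case True
    then show ?thesis using exp_point[of "b s" a c] by simp
  next
    case False
    then show ?thesis by simp
  qed
  show ?thesis
    unfolding sample_pmf_def
    by (simp add: pmf_bind 1 2 exp_point)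
qed

lemma sum_pair: "(\<Sum>z\<in>UNIV. g z) = (\<Sum>x\<in>(UNIV::'x::finite set). \<Sum>y\<in>(UNIV::'y::finite set). (g (x,y)::real))"
proof -
  have "(\<Sum>x\<in>(UNIV::'x set). \<Sum>y\<in>(UNIV::'y set). g (x,y)) = (\<Sum>(x,y)\<in>UNIV\<times>UNIV. g (x,y))" by (rule sum.cartesian_product)
  also have "\<dots> = (\<Sum>z\<in>UNIV. g z)" by (simp only: UNIV_Times_UNIV case_prod_eta)
  finally show ?thesis by simp
qed

lemma sum_sample:
  fixes h :: "'s::finite \<times> 'a::finite \<times> 's \<Rightarrow> real"
  shows "(\<Sum>z\<in>UNIV. pmf (sample_pmf p b P) z * h z) = (\<Sum>s\<in>UNIV. \<Sum>a\<in>UNIV. \<Sum>s'\<in>UNIV. pmf p s * pmf (b s) a * pmf (P s a) s' * h (s, a, s'))"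
  by (simp only: sum_pair pmf_sample)


definition TT :: "('s \<Rightarrow> 'a \<Rightarrow> 's pmf) \<Rightarrow> ('s \<Rightarrow> 'a \<Rightarrow> 's \<Rightarrow> real) \<Rightarrow> real \<Rightarrow> ('s::finite \<Rightarrow> 'a::finite \<Rightarrow> real) \<Rightarrow> 's \<Rightarrow> 'a \<Rightarrow> real" where
  "TT P r g Q s a = (\<Sum>s'\<in>UNIV. pmf (P s a) s' * (r s a s' + g * (MAX a'\<in>UNIV. Q s' a')))"

lemma TT_fix:
  assumes "bellman_opt P r g Q" shows "TT P r g Q = Q"
proof (intro ext)
  fix s a
  have "Q s a = (\<Sum>s'\<in>UNIV. pmf (P s a) s' * (r s a s' + g * (MAX a'\<in>UNIV. Q s' a')))"
    using assms unfolding bellman_opt_def by blast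
  then show "TT P r g Q s a = Q s a" unfolding TT_def by (rule sym)
qed

lemma Max_diff:
  fixes f h :: "'a::finite \<Rightarrow> real"
  assumes "\<And>x. \<bar>f x - h x\<bar> \<le> B"
  shows "\<bar>(MAX x\<in>UNIV. f x) - (MAX x\<in>UNIV. h x)\<bar> \<le> B"
proof -
  have "Max (range f) \<in> range f" by (rule Max_in) auto
  then obtain x0 where x0: "(MAX x\<in>UNIV. f x) = f x0" by blast
  have "Max (range h) \<in> range h" by (rule Max_in) auto
  then obtain x1 where x1: "(MAX x\<in>UNIV. h x) = h x1" by blast
  have "h x0 \<le> (MAX x\<in>UNIV. h x)" by (rule Max_ge) auto
  moreover have "f x1 \<le> (MAX x\<in>UNIV. f x)" by (rule Max_ge) auto
  moreover have "f x0 - h x0 \<le> B" using assms[of x0] by (simp add: abs_le_iff)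
  moreover have "h x1 - f x1 \<le> B" using assms[of x1] by (simp add: abs_le_iff)
  ultimately show ?thesis unfolding x0 x1 abs_le_iff by linarith
qed

lemma Max_abs_bound:
  fixes f :: "'a::finite \<Rightarrow> real"
  assumes "\<And>x. \<bar>f x\<bar> \<le> B"
  shows "\<bar>(MAX x\<in>UNIV. f x)\<bar> \<le> B"
proof -
  have "Max (range f) \<in> range f" by (rule Max_in) auto
  then obtain x0 where x0: "(MAX x\<in>UNIV. f x) = f x0" by blast
  then show ?thesis using assms[of x0] by simp
qed

lemma TT_lip:
  assumes g0: "0 \<le> g" and B: "\<And>s' a'. \<bar>Q s' a' - Q' s' a'\<bar> \<le> B"
  shows "\<bar>TT P r g Q s a - TT P r g Q' s a\<bar> \<le> g * B"
proof -
  have "TT P r g Q s a - TT P r g Q' s a = (\<Sum>s'\<in>UNIV. pmf (P s a) s' * (g * ((MAX a'\<in>UNIV. Q s' a') - (MAX a'\<in>UNIV. Q' s' a'))))"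
    unfolding TT_def sum_subtractf[symmetric] by (rule sum.cong[OF refl]) (simp add: algebra_simps)
  also have "\<bar>\<dots>\<bar> \<le> (\<Sum>s'\<in>UNIV. \<bar>pmf (P s a) s' * (g * ((MAX a'\<in>UNIV. Q s' a') - (MAX a'\<in>UNIV. Q' s' a')))\<bar>)"
    by (rule sum_abs)
  also have "\<dots> \<le> (\<Sum>s'\<in>UNIV. pmf (P s a) s' * (g * B))"
  proof (rule sum_mono)
    fix s'
    have "\<bar>(MAX a'\<in>UNIV. Q s' a') - (MAX a'\<in>UNIV. Q' s' a')\<bar> \<le> B" by (rule Max_diff) (rule B)
    then have "g * \<bar>(MAX a'\<in>UNIV. Q s' a') - (MAX a'\<in>UNIV. Q' s' a')\<bar> \<le> g * B" using g0 by (rule mult_left_mono)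
    then have "pmf (P s a) s' * (g * \<bar>(MAX a'\<in>UNIV. Q s' a') - (MAX a'\<in>UNIV. Q' s' a')\<bar>) \<le> pmf (P s a) s' * (g * B)"
      by (rule mult_left_mono) simp
    then show "\<bar>pmf (P s a) s' * (g * ((MAX a'\<in>UNIV. Q s' a') - (MAX a'\<in>UNIV. Q' s' a')))\<bar> \<le> pmf (P s a) s' * (g * B)"
      using g0 by (simp add: abs_mult)
  qed
  also have "\<dots> = g * B" by (simp add: sum_distrib_right[symmetric] sum_pmf_eq_1)
  finally show ?thesis .
qed

lemma convex_bound:
  fixes x y M \<alpha> :: real
  assumes "0 \<le> \<alpha>" "\<alpha> \<le> 1" "\<bar>x\<bar> \<le> M" "\<bar>y\<bar> \<le> M"
  shows "\<bar>(1 - \<alpha>) * x + \<alpha> * y\<bar> \<le> M"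
proof -
  have "\<bar>(1 - \<alpha>) * x + \<alpha> * y\<bar> \<le> (1 - \<alpha>) * \<bar>x\<bar> + \<alpha> * \<bar>y\<bar>"
  proof -
    have "\<bar>(1 - \<alpha>) * x + \<alpha> * y\<bar> \<le> \<bar>(1 - \<alpha>) * x\<bar> + \<bar>\<alpha> * y\<bar>" by (rule abs_triangle_ineq)
    also have "\<dots> = (1 - \<alpha>) * \<bar>x\<bar> + \<alpha> * \<bar>y\<bar>" using assms by (simp add: abs_mult)
    finally show ?thesis .
  qed
  also have "\<dots> \<le> (1 - \<alpha>) * M + \<alpha> * M" using assms by (intro add_mono mult_left_mono) auto
  finally show ?thesis by (simp add: algebra_simps)
qed


locale qsetup =
  fixes P :: "'s::finite \<Rightarrow> 'a::finite \<Rightarrow> 's pmf" and r :: "'s \<Rightarrow> 'a \<Rightarrow> 's \<Rightarrow> real" and g be :: real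
    and al :: "nat \<Rightarrow> real" and QA0 QB0 :: "'s \<Rightarrow> 'a \<Rightarrow> real" and p :: "'s pmf" and b :: "'s \<Rightarrow> 'a pmf"
  assumes g0: "0 \<le> g" and g1: "g < 1" and be0: "0 < be"
    and al0: "\<And>k. 0 \<le> al k" and al1: "\<And>k. al k \<le> 1"
begin

definition qa where "qa k xs = fst (agt2_iter r g be al QA0 QB0 xs k)"
definition qb where "qb k xs = snd (agt2_iter r g be al QA0 QB0 xs k)"
definition d where "d s a = pmf p s * pmf (b s) a"
definition T where "T = TT P r g"
definition phiA where "phiA s a k xs z = (if fst z = s \<and> fst (snd z) = a then r s a (snd (snd z)) + g * (MAX a'\<in>UNIV. qb k xs (snd (snd z)) a') - qa k xs s a else 0) - d s a * (T (qb k xs) s a - qa k xs s a)"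
definition phiB where "phiB s a k xs z = (if fst z = s \<and> fst (snd z) = a then be * (qa k xs s a - qb k xs s a) else 0) - d s a * (be * (qa k xs s a - qb k xs s a))"

lemma qa_Suc: "qa (Suc k) xs = fst (agt2_step r g be (al k) (qa k xs, qb k xs) (xs k))"
  by (simp add: qa_def qb_def)
lemma qb_Suc: "qb (Suc k) xs = snd (agt2_step r g be (al k) (qa k xs, qb k xs) (xs k))"
  by (simp add: qa_def qb_def)

lemma recA: "qa (Suc k) xs s a = qa k xs s a + al k * d s a * (T (qb k xs) s a - qa k xs s a) + al k * phiA s a k xs (xs k)"
proof -
  obtain s0 a0 s0' where x: "xs k = (s0, a0, s0')" by (cases "xs k") auto
  show ?thesis
    by (cases "s = s0 \<and> a = a0") (auto simp: qa_Suc x agt2_step_def phiA_def algebra_simps)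
qed

lemma recB: "qb (Suc k) xs s a = qb k xs s a + al k * be * d s a * (qa k xs s a - qb k xs s a) + al k * phiB s a k xs (xs k)"
proof -
  obtain s0 a0 s0' where x: "xs k = (s0, a0, s0')" by (cases "xs k") auto
  show ?thesis
    by (cases "s = s0 \<and> a = a0") (auto simp: qb_Suc x agt2_step_def phiB_def algebra_simps)
qed

lemma iter_dep: "dep k (\<lambda>xs. agt2_iter r g be al QA0 QB0 xs k)"
  unfolding dep_def
proof (induction k)
  case 0
  then show ?case by simp
next
  case (Suc k)
  show ?case
  proof (intro allI impI)
    fix xs ys :: "nat \<Rightarrow> 's \<times> 'a \<times> 's" assume h: "\<forall>j<Suc k. xs j = ys j"
    then have "agt2_iter r g be al QA0 QB0 xs k = agt2_iter r g be al QA0 QB0 ys k" using Suc.IH by auto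
    moreover have "xs k = ys k" using h by auto
    ultimately show "agt2_iter r g be al QA0 QB0 xs (Suc k) = agt2_iter r g be al QA0 QB0 ys (Suc k)" by simp
  qed
qed

lemma qq_eq: "\<forall>j<k. xs j = ys j \<Longrightarrow> qa k xs = qa k ys \<and> qb k xs = qb k ys"
  using depD[OF iter_dep, of k xs ys] by (simp add: qa_def qb_def)

lemma phiA_dep: "dep k (\<lambda>xs. phiA s a k xs z)"
  unfolding dep_def
proof (intro allI impI)
  fix xs ys :: "nat \<Rightarrow> 's \<times> 'a \<times> 's" assume "\<forall>j<k. xs j = ys j"
  then have "qa k xs = qa k ys" "qb k xs = qb k ys" using qq_eq[of k xs ys] by auto
  then show "phiA s a k xs z = phiA s a k ys z" by (simp add: phiA_def)
qed

lemma phiB_dep: "dep k (\<lambda>xs. phiB s a k xs z)"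
  unfolding dep_def
proof (intro allI impI)
  fix xs ys :: "nat \<Rightarrow> 's \<times> 'a \<times> 's" assume "\<forall>j<k. xs j = ys j"
  then have "qa k xs = qa k ys" "qb k xs = qb k ys" using qq_eq[of k xs ys] by auto
  then show "phiB s a k xs z = phiB s a k ys z" by (simp add: phiB_def)
qed

lemma ind_sum:
  fixes f :: "'s \<Rightarrow> real"
  shows "(\<Sum>z\<in>UNIV. pmf (sample_pmf p b P) z * (if fst z = s \<and> fst (snd z) = a then f (snd (snd z)) else 0))
     = d s a * (\<Sum>s'\<in>UNIV. pmf (P s a) s' * f s')"
proof -
  have in1: "(\<Sum>s1'\<in>UNIV. pmf p s1 * pmf (b s1) a1 * pmf (P s1 a1) s1' * (if s1 = s \<and> a1 = a then f s1' else 0))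
      = (if s1 = s \<and> a1 = a then pmf p s * pmf (b s) a * (\<Sum>s'\<in>UNIV. pmf (P s a) s' * f s') else 0)" for s1 a1
    by (cases "s1 = s \<and> a1 = a") (auto simp: sum_distrib_left mult_ac)
  have in2: "(\<Sum>a1\<in>UNIV. (if s1 = s \<and> a1 = a then c else 0)) = (if s1 = s then c else 0)" for s1 and c :: real
    by (cases "s1 = s") auto
  have "(\<Sum>z\<in>UNIV. pmf (sample_pmf p b P) z * (if fst z = s \<and> fst (snd z) = a then f (snd (snd z)) else 0))
     = (\<Sum>s1\<in>UNIV. \<Sum>a1\<in>UNIV. \<Sum>s1'\<in>UNIV. pmf p s1 * pmf (b s1) a1 * pmf (P s1 a1) s1' * (if s1 = s \<and> a1 = a then f s1' else 0))"
    by (simp only: sum_sample fst_conv snd_conv)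
  also have "\<dots> = (\<Sum>s1\<in>UNIV. \<Sum>a1\<in>UNIV. (if s1 = s \<and> a1 = a then pmf p s * pmf (b s) a * (\<Sum>s'\<in>UNIV. pmf (P s a) s' * f s') else 0))"
    by (simp only: in1)
  also have "\<dots> = (\<Sum>s1\<in>UNIV. (if s1 = s then pmf p s * pmf (b s) a * (\<Sum>s'\<in>UNIV. pmf (P s a) s' * f s') else 0))"
    by (simp only: in2)
  also have "\<dots> = d s a * (\<Sum>s'\<in>UNIV. pmf (P s a) s' * f s')" by (simp add: d_def)
  finally show ?thesis .
qed

lemma phiA_mean: "(\<Sum>z\<in>UNIV. pmf (sample_pmf p b P) z * phiA s a k xs z) = 0"
proof -
  let ?c = "d s a * (T (qb k xs) s a - qa k xs s a)"
  let ?f = "\<lambda>s'. r s a s' + g * (MAX a'\<in>UNIV. qb k xs s' a') - qa k xs s a"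
  have "(\<Sum>z\<in>UNIV. pmf (sample_pmf p b P) z * phiA s a k xs z)
     = (\<Sum>z\<in>UNIV. pmf (sample_pmf p b P) z * (if fst z = s \<and> fst (snd z) = a then ?f (snd (snd z)) else 0))
       - (\<Sum>z\<in>UNIV. pmf (sample_pmf p b P) z) * ?c"
    unfolding phiA_def by (simp add: right_diff_distrib sum_subtractf sum_distrib_right)
  also have "(\<Sum>z\<in>UNIV. pmf (sample_pmf p b P) z) = 1" by (rule sum_pmf_eq_1) auto
  also have "(\<Sum>z\<in>UNIV. pmf (sample_pmf p b P) z * (if fst z = s \<and> fst (snd z) = a then ?f (snd (snd z)) else 0))
      = d s a * (\<Sum>s'\<in>UNIV. pmf (P s a) s' * ?f s')" by (rule ind_sum)
  also have "(\<Sum>s'\<in>UNIV. pmf (P s a) s' * ?f s') = T (qb k xs) s a - qa k xs s a"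
  proof -
    have "(\<Sum>s'\<in>UNIV. pmf (P s a) s' * ?f s') = (\<Sum>s'\<in>UNIV. pmf (P s a) s' * (r s a s' + g * (MAX a'\<in>UNIV. qb k xs s' a'))) - (\<Sum>s'\<in>UNIV. pmf (P s a) s') * qa k xs s a"
      by (simp add: right_diff_distrib sum_subtractf sum_distrib_right)
    also have "(\<Sum>s'\<in>UNIV. pmf (P s a) s') = 1" by (rule sum_pmf_eq_1) auto
    finally show ?thesis by (simp add: T_def TT_def)
  qed
  finally show ?thesis by simp
qed

lemma phiB_mean: "(\<Sum>z\<in>UNIV. pmf (sample_pmf p b P) z * phiB s a k xs z) = 0"
proof -
  let ?c = "d s a * (be * (qa k xs s a - qb k xs s a))"
  let ?f = "\<lambda>s'::'s. be * (qa k xs s a - qb k xs s a)"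
  have "(\<Sum>z\<in>UNIV. pmf (sample_pmf p b P) z * phiB s a k xs z)
     = (\<Sum>z\<in>UNIV. pmf (sample_pmf p b P) z * (if fst z = s \<and> fst (snd z) = a then ?f (snd (snd z)) else 0))
       - (\<Sum>z\<in>UNIV. pmf (sample_pmf p b P) z) * ?c"
    unfolding phiB_def by (simp add: right_diff_distrib sum_subtractf sum_distrib_right)
  also have "(\<Sum>z\<in>UNIV. pmf (sample_pmf p b P) z) = 1" by (rule sum_pmf_eq_1) auto
  also have "(\<Sum>z\<in>UNIV. pmf (sample_pmf p b P) z * (if fst z = s \<and> fst (snd z) = a then ?f (snd (snd z)) else 0))
      = d s a * (\<Sum>s'\<in>UNIV. pmf (P s a) s' * ?f s')" by (rule ind_sum)
  also have "(\<Sum>s'\<in>UNIV. pmf (P s a) s' * ?f s') = be * (qa k xs s a - qb k xs s a)"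
    by (simp add: sum_distrib_right[symmetric] sum_pmf_eq_1)
  finally show ?thesis by simp
qed

definition R where "R = mx (\<lambda>z::'s \<times> 'a \<times> 's. \<bar>r (fst z) (fst (snd z)) (snd (snd z))\<bar>)"

lemma r_bnd: "\<bar>r s a s'\<bar> \<le> R"
  using mx_ge[of "\<lambda>z::'s \<times> 'a \<times> 's. \<bar>r (fst z) (fst (snd z)) (snd (snd z))\<bar>" "(s, a, s')"] by (simp add: R_def)

lemma R0: "0 \<le> R" using r_bnd[of undefined undefined undefined] by linarith

lemma T_bnd:
  assumes "\<And>s' a'. \<bar>Q s' a'\<bar> \<le> B"
  shows "\<bar>T Q s a\<bar> \<le> R + g * B"
proof -
  have "\<bar>T Q s a\<bar> \<le> (\<Sum>s'\<in>UNIV. \<bar>pmf (P s a) s' * (r s a s' + g * (MAX a'\<in>UNIV. Q s' a'))\<bar>)"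
    unfolding T_def TT_def by (rule sum_abs)
  also have "\<dots> \<le> (\<Sum>s'\<in>UNIV. pmf (P s a) s' * (R + g * B))"
  proof (rule sum_mono)
    fix s'
    have M: "\<bar>(MAX a'\<in>UNIV. Q s' a')\<bar> \<le> B" by (rule Max_abs_bound) (rule assms)
    have "\<bar>r s a s' + g * (MAX a'\<in>UNIV. Q s' a')\<bar> \<le> \<bar>r s a s'\<bar> + g * \<bar>(MAX a'\<in>UNIV. Q s' a')\<bar>"
      using g0 by (metis abs_mult abs_of_nonneg abs_triangle_ineq)
    also have "\<dots> \<le> R + g * B" using r_bnd[of s a s'] M g0 by (intro add_mono mult_left_mono) auto
    finally have "\<bar>r s a s' + g * (MAX a'\<in>UNIV. Q s' a')\<bar> \<le> R + g * B" .
    then have "pmf (P s a) s' * \<bar>r s a s' + g * (MAX a'\<in>UNIV. Q s' a')\<bar> \<le> pmf (P s a) s' * (R + g * B)"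
      by (rule mult_left_mono) simp
    then show "\<bar>pmf (P s a) s' * (r s a s' + g * (MAX a'\<in>UNIV. Q s' a'))\<bar> \<le> pmf (P s a) s' * (R + g * B)"
      by (simp add: abs_mult)
  qed
  also have "\<dots> = R + g * B" by (simp add: sum_distrib_right[symmetric] sum_pmf_eq_1)
  finally show ?thesis .
qed

lemma step_bound:
  fixes QA QB :: "'s \<Rightarrow> 'a \<Rightarrow> real"
  assumes A: "\<And>t c. \<bar>QA t c\<bar> \<le> B" and Bb: "\<And>t c. \<bar>QB t c\<bar> \<le> B" and B0: "0 \<le> B"
    and a0: "0 \<le> \<alpha>" and a1: "\<alpha> \<le> 1"
  shows "\<bar>fst (agt2_step r g be \<alpha> (QA, QB) x) t c\<bar> \<le> (3 + 2 * be) * B + R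
       \<and> \<bar>snd (agt2_step r g be \<alpha> (QA, QB) x) t c\<bar> \<le> (3 + 2 * be) * B + R"
    and "\<alpha> * be \<le> 1 \<Longrightarrow> \<bar>fst (agt2_step r g be \<alpha> (QA, QB) x) t c\<bar> \<le> max B (R / (1 - g))
       \<and> \<bar>snd (agt2_step r g be \<alpha> (QA, QB) x) t c\<bar> \<le> max B (R / (1 - g))"
proof -
  obtain s0 a0 s0' where x: "x = (s0, a0, s0')" by (cases x) auto
  let ?M = "MAX a'\<in>UNIV. QB s0' a'"
  have M: "\<bar>?M\<bar> \<le> B" by (rule Max_abs_bound) (rule Bb)
  have Bbe: "0 \<le> B * (be * 2)" using B0 be0 by simp
  have Bbig: "B \<le> (3 + 2 * be) * B + R" using B0 be0 R0 by (simp add: algebra_simps)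
  have Y: "\<bar>r s0 a0 s0' + g * ?M - QA s0 a0\<bar> \<le> R + 2 * B"
  proof -
    have "g * \<bar>?M\<bar> \<le> 1 * B" using g0 g1 M B0 by (intro mult_mono) auto
    then have "\<bar>g * ?M\<bar> \<le> 1 * B" using g0 by (simp add: abs_mult)
    then show ?thesis using r_bnd[of s0 a0 s0'] A[of s0 a0] unfolding abs_le_iff by linarith
  qed
  have Z: "\<bar>QA s0 a0 - QB s0 a0\<bar> \<le> 2 * B" using A[of s0 a0] Bb[of s0 a0] unfolding abs_le_iff by linarith
  show "\<bar>fst (agt2_step r g be \<alpha> (QA, QB) x) t c\<bar> \<le> (3 + 2 * be) * B + R
       \<and> \<bar>snd (agt2_step r g be \<alpha> (QA, QB) x) t c\<bar> \<le> (3 + 2 * be) * B + R"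
  proof (cases "t = s0 \<and> c = a0")
    case True
    have f: "fst (agt2_step r g be \<alpha> (QA, QB) x) t c = QA s0 a0 + \<alpha> * (r s0 a0 s0' + g * ?M - QA s0 a0)"
      using True by (simp add: x agt2_step_def)
    have s: "snd (agt2_step r g be \<alpha> (QA, QB) x) t c = QB s0 a0 + \<alpha> * be * (QA s0 a0 - QB s0 a0)"
      using True by (simp add: x agt2_step_def)
    have "\<bar>\<alpha> * (r s0 a0 s0' + g * ?M - QA s0 a0)\<bar> \<le> 1 * (R + 2 * B)"
      unfolding abs_mult using a0 a1 Y by (intro mult_mono) auto
    then have 1: "\<bar>fst (agt2_step r g be \<alpha> (QA, QB) x) t c\<bar> \<le> (3 + 2 * be) * B + R"
      unfolding f using A[of s0 a0] be0 B0 Bbe abs_triangle_ineq[of "QA s0 a0" "\<alpha> * (r s0 a0 s0' + g * ?M - QA s0 a0)"] by (simp add: algebra_simps; linarith)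
    have "\<bar>\<alpha> * be * (QA s0 a0 - QB s0 a0)\<bar> \<le> (1 * be) * (2 * B)"
      unfolding abs_mult using a0 a1 Z be0 by (intro mult_mono) auto
    then have 2: "\<bar>snd (agt2_step r g be \<alpha> (QA, QB) x) t c\<bar> \<le> (3 + 2 * be) * B + R"
      unfolding s using Bb[of s0 a0] be0 B0 R0 abs_triangle_ineq[of "QB s0 a0" "\<alpha> * be * (QA s0 a0 - QB s0 a0)"] by (simp add: algebra_simps; linarith)
    show ?thesis using 1 2 by simp
  next
    case False
    then show ?thesis using A[of t c] Bb[of t c] Bbig by (auto simp: x agt2_step_def)
  qed
  assume ab: "\<alpha> * be \<le> 1"
  let ?M' = "max B (R / (1 - g))"
  have M'B: "B \<le> ?M'" by simp
  show "\<bar>fst (agt2_step r g be \<alpha> (QA, QB) x) t c\<bar> \<le> ?M' \<and> \<bar>snd (agt2_step r g be \<alpha> (QA, QB) x) t c\<bar> \<le> ?M'"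
  proof (cases "t = s0 \<and> c = a0")
    case True
    have f: "fst (agt2_step r g be \<alpha> (QA, QB) x) t c = (1 - \<alpha>) * QA s0 a0 + \<alpha> * (r s0 a0 s0' + g * ?M)"
      using True by (simp add: x agt2_step_def algebra_simps)
    have s: "snd (agt2_step r g be \<alpha> (QA, QB) x) t c = (1 - \<alpha> * be) * QB s0 a0 + (\<alpha> * be) * QA s0 a0"
      using True by (simp add: x agt2_step_def algebra_simps)
    have RM: "\<bar>r s0 a0 s0' + g * ?M\<bar> \<le> ?M'"
    proof -
      have "R \<le> (1 - g) * ?M'"
      proof -
        have "R / (1 - g) \<le> ?M'" by simp
        then have "R \<le> ?M' * (1 - g)" using g1 by (subst (asm) pos_divide_le_eq) auto
        then show ?thesis by (simp add: mult.commute)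
      qed
      moreover have "g * B \<le> g * ?M'" using g0 by (intro mult_left_mono) auto
      moreover have "\<bar>g * ?M\<bar> \<le> g * B" using g0 M by (simp add: abs_mult mult_left_mono)
      ultimately show ?thesis using r_bnd[of s0 a0 s0'] abs_triangle_ineq[of "r s0 a0 s0'" "g * ?M"] by (simp add: algebra_simps; linarith)
    qed
    have 1: "\<bar>fst (agt2_step r g be \<alpha> (QA, QB) x) t c\<bar> \<le> ?M'"
      unfolding f by (rule convex_bound[OF a0 a1 _ RM]) (use A[of s0 a0] in auto)
    have 2: "\<bar>snd (agt2_step r g be \<alpha> (QA, QB) x) t c\<bar> \<le> ?M'"
      unfolding s by (rule convex_bound) (use a0 be0 ab A[of s0 a0] Bb[of s0 a0] in auto)
    show ?thesis using 1 2 by simp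
  next
    case False
    then show ?thesis using A[of t c] Bb[of t c] M'B by (auto simp: x agt2_step_def)
  qed
qed

definition N0 where "N0 = mx (\<lambda>q::'s \<times> 'a. max \<bar>QA0 (fst q) (snd q)\<bar> \<bar>QB0 (fst q) (snd q)\<bar>)"

lemma N0_ge: "\<bar>QA0 s a\<bar> \<le> N0 \<and> \<bar>QB0 s a\<bar> \<le> N0"
  using mx_ge[of "\<lambda>q::'s \<times> 'a. max \<bar>QA0 (fst q) (snd q)\<bar> \<bar>QB0 (fst q) (snd q)\<bar>" "(s, a)"]
  by (simp add: N0_def)

lemma N00: "0 \<le> N0" using N0_ge[of undefined undefined] by linarith

fun Bd :: "nat \<Rightarrow> nat \<Rightarrow> real" where
  "Bd K0 0 = N0"
| "Bd K0 (Suc k) = (if K0 \<le> k then max (Bd K0 k) (R / (1 - g)) else (3 + 2 * be) * Bd K0 k + R)"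

lemma Rg0: "0 \<le> R / (1 - g)" using R0 g1 by simp

lemma Bd0: "0 \<le> Bd K0 k"
proof (induction k)
  case 0 then show ?case using N00 by simp
next
  case (Suc k)
  have "0 \<le> (3 + 2 * be) * Bd K0 k + R" using Suc be0 R0 by simp
  then show ?case using Suc by auto
qed

lemma iter_bnd:
  assumes H: "\<And>k. K0 \<le> k \<Longrightarrow> al k * be \<le> 1"
  shows "\<bar>qa k xs s a\<bar> \<le> Bd K0 k \<and> \<bar>qb k xs s a\<bar> \<le> Bd K0 k"
proof (induction k arbitrary: s a)
  case 0
  then show ?case using N0_ge[of s a] by (simp add: qa_def qb_def)
next
  case (Suc k)
  have A: "\<And>t c. \<bar>qa k xs t c\<bar> \<le> Bd K0 k" and B: "\<And>t c. \<bar>qb k xs t c\<bar> \<le> Bd K0 k" using Suc by auto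
  show ?case
  proof (cases "K0 \<le> k")
    case True
    have "\<bar>fst (agt2_step r g be (al k) (qa k xs, qb k xs) (xs k)) s a\<bar> \<le> max (Bd K0 k) (R / (1 - g))
       \<and> \<bar>snd (agt2_step r g be (al k) (qa k xs, qb k xs) (xs k)) s a\<bar> \<le> max (Bd K0 k) (R / (1 - g))"
      by (rule step_bound(2)[OF A B Bd0 al0 al1 H[OF True]])
    then show ?thesis using True by (simp add: qa_Suc qb_Suc)
  next
    case False
    have "\<bar>fst (agt2_step r g be (al k) (qa k xs, qb k xs) (xs k)) s a\<bar> \<le> (3 + 2 * be) * Bd K0 k + R
       \<and> \<bar>snd (agt2_step r g be (al k) (qa k xs, qb k xs) (xs k)) s a\<bar> \<le> (3 + 2 * be) * Bd K0 k + R"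
      by (rule step_bound(1)[OF A B Bd0 al0 al1])
    then show ?thesis using False by (simp add: qa_Suc qb_Suc)
  qed
qed

definition Cq where "Cq K0 = max (Max (Bd K0 ` {..K0})) (R / (1 - g))"

lemma Bd_le: "Bd K0 k \<le> Cq K0"
proof (cases "k \<le> K0")
  case True
  then have "Bd K0 k \<le> Max (Bd K0 ` {..K0})" by (intro Max_ge) auto
  then show ?thesis unfolding Cq_def by linarith
next
  case False
  have ind: "Bd K0 (K0 + i) \<le> max (Bd K0 K0) (R / (1 - g))" for i
  proof (induction i)
    case 0 then show ?case by simp
  next
    case (Suc i)
    then show ?case by simp
  qed
  have "Bd K0 K0 \<le> Max (Bd K0 ` {..K0})" by (intro Max_ge) auto
  then have "max (Bd K0 K0) (R / (1 - g)) \<le> Cq K0" unfolding Cq_def by (rule max.mono) simp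
  moreover have "Bd K0 k \<le> max (Bd K0 K0) (R / (1 - g))" using ind[of "k - K0"] False by simp
  ultimately show ?thesis by linarith
qed

lemma Cq0: "0 \<le> Cq K0" unfolding Cq_def using Rg0 by linarith

lemma q_bnd:
  assumes H: "\<And>k. K0 \<le> k \<Longrightarrow> al k * be \<le> 1"
  shows "\<bar>qa k xs s a\<bar> \<le> Cq K0 \<and> \<bar>qb k xs s a\<bar> \<le> Cq K0"
proof -
  have "\<bar>qa k xs s a\<bar> \<le> Bd K0 k \<and> \<bar>qb k xs s a\<bar> \<le> Bd K0 k" by (rule iter_bnd[OF H])
  then show ?thesis using Bd_le[of K0 k] by linarith
qed

lemma d_le1: "d s a \<le> 1"
  unfolding d_def using pmf_le_1[of p s] pmf_le_1[of "b s" a] by (intro mult_le_one) auto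

lemma d_ge0: "0 \<le> d s a" unfolding d_def by simp

lemma phiA_bnd:
  assumes H: "\<And>k. K0 \<le> k \<Longrightarrow> al k * be \<le> 1"
  shows "\<bar>phiA s a k xs z\<bar> \<le> 2 * (R + 2 * Cq K0)"
proof -
  have qa: "\<And>t c. \<bar>qa k xs t c\<bar> \<le> Cq K0" and qb: "\<And>t c. \<bar>qb k xs t c\<bar> \<le> Cq K0"
    using q_bnd[OF H] by auto
  have gC: "g * Cq K0 \<le> Cq K0" using g1 Cq0 by (simp add: mult_left_le_one_le g0)
  have X: "\<bar>(if fst z = s \<and> fst (snd z) = a then r s a (snd (snd z)) + g * (MAX a'\<in>UNIV. qb k xs (snd (snd z)) a') - qa k xs s a else 0)\<bar> \<le> R + 2 * Cq K0"
  proof (cases "fst z = s \<and> fst (snd z) = a")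
    case True
    have M: "\<bar>(MAX a'\<in>UNIV. qb k xs (snd (snd z)) a')\<bar> \<le> Cq K0" by (rule Max_abs_bound) (rule qb)
    have "\<bar>g * (MAX a'\<in>UNIV. qb k xs (snd (snd z)) a')\<bar> \<le> g * Cq K0"
      using M g0 by (simp add: abs_mult mult_left_mono)
    then show ?thesis using True r_bnd[of s a "snd (snd z)"] qa[of s a] gC unfolding abs_le_iff by auto
  next
    case False
    then show ?thesis using R0 Cq0[of K0] by (subst if_not_P) auto
  qed
  have Y: "\<bar>d s a * (T (qb k xs) s a - qa k xs s a)\<bar> \<le> R + 2 * Cq K0"
  proof -
    have "\<bar>T (qb k xs) s a\<bar> \<le> R + g * Cq K0" by (rule T_bnd) (rule qb)
    then have "\<bar>T (qb k xs) s a - qa k xs s a\<bar> \<le> R + 2 * Cq K0" using qa[of s a] gC unfolding abs_le_iff by linarith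
    moreover have "\<bar>d s a\<bar> \<le> 1" using d_le1 d_ge0 by simp
    ultimately have "\<bar>d s a\<bar> * \<bar>T (qb k xs) s a - qa k xs s a\<bar> \<le> 1 * (R + 2 * Cq K0)"
      by (intro mult_mono) auto
    then show ?thesis by (simp add: abs_mult)
  qed
  show ?thesis unfolding phiA_def by (rule order.trans[OF abs_triangle_ineq4]) (use add_mono[OF X Y] in simp)
qed

lemma phiB_bnd:
  assumes H: "\<And>k. K0 \<le> k \<Longrightarrow> al k * be \<le> 1"
  shows "\<bar>phiB s a k xs z\<bar> \<le> 4 * be * Cq K0"
proof -
  have qa: "\<bar>qa k xs s a\<bar> \<le> Cq K0" and qb: "\<bar>qb k xs s a\<bar> \<le> Cq K0"
    using q_bnd[OF H] by auto
  have Z: "\<bar>be * (qa k xs s a - qb k xs s a)\<bar> \<le> be * (2 * Cq K0)"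
  proof -
    have "\<bar>qa k xs s a - qb k xs s a\<bar> \<le> 2 * Cq K0" using qa qb unfolding abs_le_iff by linarith
    then show ?thesis using be0 by (simp add: abs_mult mult_left_mono)
  qed
  have X: "\<bar>(if fst z = s \<and> fst (snd z) = a then be * (qa k xs s a - qb k xs s a) else 0)\<bar> \<le> be * (2 * Cq K0)"
    using Z be0 Cq0 by auto
  have Y: "\<bar>d s a * (be * (qa k xs s a - qb k xs s a))\<bar> \<le> be * (2 * Cq K0)"
  proof -
    have "\<bar>d s a\<bar> * \<bar>be * (qa k xs s a - qb k xs s a)\<bar> \<le> 1 * (be * (2 * Cq K0))"
      using d_le1[of s a] d_ge0[of s a] Z by (intro mult_mono) auto
    then show ?thesis by (simp add: abs_mult)
  qed
  show ?thesis unfolding phiB_def by (rule order.trans[OF abs_triangle_ineq4]) (use add_mono[OF X Y] in simp)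
qed

end


context iidq begin
lemma as_conv':
  fixes phi :: "nat \<Rightarrow> (nat \<Rightarrow> 'z) \<Rightarrow> 'z \<Rightarrow> real" and al :: "nat \<Rightarrow> real" and C :: real
  assumes "\<And>k z. dep k (\<lambda>xs. phi k xs z)" "\<And>k xs z. \<bar>phi k xs z\<bar> \<le> C"
    "\<And>k xs. (\<Sum>z\<in>UNIV. pmf mu z * phi k xs z) = 0" "summable (\<lambda>k. (al k)\<^sup>2)"
  shows "AE \<omega> in M. convergent (\<lambda>m. \<Sum>k<m. al k * phi k (path \<omega>) (X k \<omega>))"
  by (rule as_conv2[where phi=phi and al=al and C=C, OF assms])
end

theorem theorem3:
  fixes P :: "'s::finite \<Rightarrow> 'a::finite \<Rightarrow> 's pmf"
    and r :: "'s \<Rightarrow> 'a \<Rightarrow> 's \<Rightarrow> real"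
    and g be :: real
    and Qstar QA0 QB0 :: "'s \<Rightarrow> 'a \<Rightarrow> real"
    and p :: "'s pmf" and b :: "'s \<Rightarrow> 'a pmf"
    and al :: "nat \<Rightarrow> real"
    and M :: "'m measure"
    and X :: "nat \<Rightarrow> 'm \<Rightarrow> 's \<times> 'a \<times> 's"
  assumes "0 \<le> g" "g < 1"
    and "bellman_opt P r g Qstar"
    and "be > 0"
    and "\<And>s a. pmf p s * pmf (b s) a > 0"
    and "prob_space M"
    and "\<And>k. X k \<in> measurable M (count_space UNIV)"
    and "prob_space.indep_vars M (\<lambda>_. count_space UNIV) X UNIV"
    and "\<And>k. distr M (count_space UNIV) (X k) = measure_pmf (sample_pmf p b P)"
    and "\<And>k. 0 \<le> al k" "\<And>k. al k \<le> 1"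
    and "\<not> summable al"
    and "summable (\<lambda>k. (al k)\<^sup>2)"
  shows "AE \<omega> in M. \<forall>s a.
           (\<lambda>k. fst (agt2_iter r g be al QA0 QB0 (\<lambda>j. X j \<omega>) k) s a) \<longlonglongrightarrow> Qstar s a \<and>
           (\<lambda>k. snd (agt2_iter r g be al QA0 QB0 (\<lambda>j. X j \<omega>) k) s a) \<longlonglongrightarrow> Qstar s a"
proof -
  note A = assms
  interpret I: iidq M X "sample_pmf p b P"
    by (intro iidq.intro A(6) A(7) A(8) A(9))
  interpret Q: qsetup P r g be al QA0 QB0 p b
    by (intro qsetup.intro A(1) A(2) A(4) A(10) A(11))
  have al_lim: "al \<longlonglongrightarrow> 0"
  proof -
    have "(\<lambda>k. sqrt ((al k)\<^sup>2)) \<longlonglongrightarrow> sqrt 0"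
      by (intro tendsto_real_sqrt summable_LIMSEQ_zero A(13))
    moreover have "(\<lambda>k. sqrt ((al k)\<^sup>2)) = al" using A(10) by (auto simp: fun_eq_iff)
    ultimately show ?thesis by simp
  qed
  have "\<forall>\<^sub>F k in sequentially. al k < 1 / be"
    using order_tendstoD(2)[OF al_lim, of "1 / be"] A(4) by simp
  then obtain K0 where K0': "\<And>k. K0 \<le> k \<Longrightarrow> al k < 1 / be" by (auto simp: eventually_sequentially)
  have K0: "\<And>k. K0 \<le> k \<Longrightarrow> al k * be \<le> 1"
  proof -
    fix k assume "K0 \<le> k"
    then have "al k < 1 / be" by (rule K0')
    then show "al k * be \<le> 1" using A(4) by (simp add: field_simps)
  qed
  have cA: "AE \<omega> in M. \<forall>s a. convergent (\<lambda>n. \<Sum>k<n. al k * Q.phiA s a k (I.path \<omega>) (X k \<omega>))"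
  proof -
    have "AE \<omega> in M. convergent (\<lambda>n. \<Sum>k<n. al k * Q.phiA s a k (I.path \<omega>) (X k \<omega>))" for s a
      by (rule I.as_conv'[where C="2 * (Q.R + 2 * Q.Cq K0)"])
        (use Q.phiA_dep Q.phiA_bnd[OF K0] Q.phiA_mean A(13) in auto)
    then show ?thesis by (simp add: AE_all_countable)
  qed
  have cB: "AE \<omega> in M. \<forall>s a. convergent (\<lambda>n. \<Sum>k<n. al k * Q.phiB s a k (I.path \<omega>) (X k \<omega>))"
  proof -
    have "AE \<omega> in M. convergent (\<lambda>n. \<Sum>k<n. al k * Q.phiB s a k (I.path \<omega>) (X k \<omega>))" for s a
      by (rule I.as_conv'[where C="4 * be * Q.Cq K0"])
        (use Q.phiB_dep Q.phiB_bnd[OF K0] Q.phiB_mean A(13) in auto)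
    then show ?thesis by (simp add: AE_all_countable)
  qed
  from cA cB show ?thesis
  proof eventually_elim
    case (elim \<omega>)
    let ?xs = "I.path \<omega>"
    have xs: "?xs = (\<lambda>j. X j \<omega>)" by (simp add: I.path_def)
    have "(\<lambda>k. Q.qa k ?xs s a) \<longlonglongrightarrow> Qstar s a \<and> (\<lambda>k. Q.qb k ?xs s a) \<longlonglongrightarrow> Qstar s a" for s a
    proof (rule det_conv[where QA="\<lambda>k. Q.qa k ?xs" and QB="\<lambda>k. Q.qb k ?xs"
          and wA="\<lambda>k s a. Q.phiA s a k ?xs (?xs k)" and wB="\<lambda>k s a. Q.phiB s a k ?xs (?xs k)"
          and d=Q.d and T=Q.T and K=K0])
      show "0 \<le> g" "g < 1" "0 < be" using A by auto
      show "\<And>s a. 0 < Q.d s a" using A(5) by (simp add: Q.d_def)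
      show "\<And>s a. Q.d s a \<le> 1" by (rule Q.d_le1)
      show "\<And>k. 0 \<le> al k" by (rule A(10))
      show "\<And>k. K0 \<le> k \<Longrightarrow> al k \<le> 1 \<and> al k * be \<le> 1" using A(11) K0 by auto
      show "\<not> summable al" by (rule A(12))
      show "\<And>Q Q' B s a. (\<And>s' a'. \<bar>Q s' a' - Q' s' a'\<bar> \<le> B) \<Longrightarrow> \<bar>Q.T Q s a - Q.T Q' s a\<bar> \<le> g * B"
        unfolding Q.T_def by (rule TT_lip[OF A(1)])
      show "Q.T Qstar = Qstar" unfolding Q.T_def by (rule TT_fix[OF A(3)])
      show "\<And>k s a. Q.qa (Suc k) ?xs s a = Q.qa k ?xs s a + al k * Q.d s a * (Q.T (Q.qb k ?xs) s a - Q.qa k ?xs s a) + al k * Q.phiA s a k ?xs (?xs k)"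
        by (rule Q.recA)
      show "\<And>k s a. Q.qb (Suc k) ?xs s a = Q.qb k ?xs s a + al k * be * Q.d s a * (Q.qa k ?xs s a - Q.qb k ?xs s a) + al k * Q.phiB s a k ?xs (?xs k)"
        by (rule Q.recB)
      show "\<And>s a. convergent (\<lambda>n. \<Sum>k<n. al k * Q.phiA s a k ?xs (?xs k))"
        using elim by (simp add: I.path_def)
      show "\<And>s a. convergent (\<lambda>n. \<Sum>k<n. al k * Q.phiB s a k ?xs (?xs k))"
        using elim by (simp add: I.path_def)
    qed
    then show ?case by (simp add: Q.qa_def Q.qb_def xs)
  qed
qed


end
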